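(* Let $\mathbb{X}$ be a stationary $N$-dimensional VAR process of order $p$ with associated causal time-series graph $\mathcal{G}$, and let $\mathbf{X} = (X^{i_1}(s_1), \dots, X^{i_n}(s_n))$ and $\mathbf{Y} = (Y^{1}, \dots, Y^{m})$ be two disjoint finite sets of nodes of $\mathcal{G}$. Then each variable $Y^{j}$ of $\mathbf{Y}$ admits the description $$Y^{j} = \sum_{l=1}^{n} \theta(j,l)\, X^{i_l}(s_l) + g^j(\mathbf{X}'') + \eta,$$ where $\mathbf{X}''$ is a random vector whose components are the elements of a finite subset of $\mathrm{anc}(Y^{j})_{\neg \mathbf{X}}$, $g^j$ is a linear function, $\eta$ is a Gaussian random variable, and $$\theta(j,l) = \sum_{q \in \mathcal{P}(\mathbf{X}, X^{i_l}(s_l), Y^{j})} w(q)$$ is the sum of the weights of all proper causal paths from $\mathbf{X}$ to $Y^{j}$ with starting point $X^{i_l}(s_l)$. In particular, the causal effect function $\mathbf{x} \mapsto \mathbb{E}(\mathbf{Y} \mid \mathrm{do}(\mathbf{X}) \coloneqq \mathbf{x})$ of $\mathbf{X}$ on $\mathbf{Y}$ is linear and given by the matrix $\Theta = (\theta(j,l))_{j,l} \in \mathbb{R}^{m \times n}$.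
   Context: A VAR process of order $p$ is a stochastic process $\{\mathbb{X}(t)\}_{t\in\mathbb{Z}}$ of $N$-dimensional random vectors $\mathbb{X}(t) = (X^1(t),\dots,X^N(t))$ satisfying $\mathbb{X}(t) = \sum_{k=1}^{p} \Phi(k)\mathbb{X}(t-k) + \eta(t)$, where $\Phi(k)\in\mathbb{R}^{N\times N}$ and $\eta(t)$ is zero-mean Gaussian white noise whose components are mutually and serially independent. Its causal time-series graph $\mathcal{G}$ has node set $\{X^i(t): 1\le i\le N, t\in\mathbb{Z}\}$ and a directed edge $X^k(t-s)\to X^l(t)$ (for $1\le s\le p$) iff $\Phi(s)_{l,k}\neq 0$; each node is thus a linear function of its parents plus its own noise term. An intervention $\mathrm{do}(\mathbf{X})\coloneqq\mathbf{x}$ replaces the defining equation of each node $X^{i_l}(s_l)\in\mathbf{X}$ by the constant $x_l$, leaving all other equations and noise variables unchanged; $\mathbb{E}(\cdot\mid\mathrm{do}(\mathbf{X})\coloneqq\mathbf{x})$ denotes expectation under the resulting distribution. A causal (directed) path is a sequence of nodes $(Z_1,\dots,Z_k)$ with $Z_r\to Z_{r+1}$ an edge for every $r$; it is proper from a set $\mathbf{X}$ if only its starting point lies in $\mathbf{X}$. $\mathcal{P}(\mathbf{X}, X^{i_l}(s_l), Y)$ denotes the set of proper causal paths from $\mathbf{X}$ to $Y$ with starting point $X^{i_l}(s_l)$. The weight of a causal path $q = (X^{a_1}(t_1),\dots,X^{a_k}(t_k))$ is $w(q) = \prod_{r=1}^{k-1}\Phi(t_{r+1}-t_r)_{a_{r+1},a_r}$.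 $\mathrm{anc}(Y)$ is the set of nodes having a directed path to $Y$, $\mathrm{des}(\mathbf{X})$ the set of nodes reachable by a directed path from some node of $\mathbf{X}$, and $\mathrm{anc}(Y)_{\neg\mathbf{X}} = \mathrm{anc}(Y)\setminus(\mathbf{X}\cup\mathrm{des}(\mathbf{X}))$. *)

theory Defs
  imports "HOL-Probability.Probability" "Jordan_Normal_Form.Determinant"
begin

text \<open>Nodes of the time-series graph: pairs (component index i, time t), with
  component indices 0,...,N-1 (0-based).  The coefficient matrices are given by
  Phi s l k = Phi(s)_{l,k} (entry in row l, column k of the lag-s matrix).\<close>

type_synonym node = "nat \<times> int"

definition node_ok :: "nat \<Rightarrow> node \<Rightarrow> bool" where
  "node_ok N v \<longleftrightarrow> fst v < N"

definition ts_edge :: "nat \<Rightarrow> nat \<Rightarrow> (nat \<Rightarrow> nat \<Rightarrow> nat \<Rightarrow> real) \<Rightarrow> node \<Rightarrow> node \<Rightarrow> bool" where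
  "ts_edge N p Phi u v \<longleftrightarrow> fst u < N \<and> fst v < N \<and> 1 \<le> snd v - snd u \<and> snd v - snd u \<le> int p
     \<and> Phi (nat (snd v - snd u)) (fst v) (fst u) \<noteq> 0"

definition ts_edges :: "nat \<Rightarrow> nat \<Rightarrow> (nat \<Rightarrow> nat \<Rightarrow> nat \<Rightarrow> real) \<Rightarrow> node rel" where
  "ts_edges N p Phi = {(u, v). ts_edge N p Phi u v}"

fun causal_path :: "nat \<Rightarrow> nat \<Rightarrow> (nat \<Rightarrow> nat \<Rightarrow> nat \<Rightarrow> real) \<Rightarrow> node list \<Rightarrow> bool" where
  "causal_path N p Phi [] = False"
| "causal_path N p Phi [v] = node_ok N v"
| "causal_path N p Phi (u # v # rest) = (ts_edge N p Phi u v \<and> causal_path N p Phi (v # rest))"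

fun path_weight :: "(nat \<Rightarrow> nat \<Rightarrow> nat \<Rightarrow> real) \<Rightarrow> node list \<Rightarrow> real" where
  "path_weight Phi [] = 1"
| "path_weight Phi [v] = 1"
| "path_weight Phi (u # v # rest) =
     Phi (nat (snd v - snd u)) (fst v) (fst u) * path_weight Phi (v # rest)"

definition proper_paths :: "nat \<Rightarrow> nat \<Rightarrow> (nat \<Rightarrow> nat \<Rightarrow> nat \<Rightarrow> real) \<Rightarrow> node set \<Rightarrow> node \<Rightarrow> node \<Rightarrow> node list set" where
  "proper_paths N p Phi Xs x Y =
     {q. causal_path N p Phi q \<and> hd q = x \<and> last q = Y \<and> (\<forall>z\<in>set (tl q). z \<notin> Xs)}"

definition theta :: "nat \<Rightarrow> nat \<Rightarrow> (nat \<Rightarrow> nat \<Rightarrow> nat \<Rightarrow> real) \<Rightarrow> node set \<Rightarrow> node \<Rightarrow> node \<Rightarrow> real" where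
  "theta N p Phi Xs x Y = (\<Sum>q\<in>proper_paths N p Phi Xs x Y. path_weight Phi q)"

definition anc :: "nat \<Rightarrow> nat \<Rightarrow> (nat \<Rightarrow> nat \<Rightarrow> nat \<Rightarrow> real) \<Rightarrow> node \<Rightarrow> node set" where
  "anc N p Phi Y = {u. (u, Y) \<in> (ts_edges N p Phi)\<^sup>+}"

definition des :: "nat \<Rightarrow> nat \<Rightarrow> (nat \<Rightarrow> nat \<Rightarrow> nat \<Rightarrow> real) \<Rightarrow> node set \<Rightarrow> node set" where
  "des N p Phi Xs = {v. \<exists>u\<in>Xs. (u, v) \<in> (ts_edges N p Phi)\<^sup>+}"

definition anc_not :: "nat \<Rightarrow> nat \<Rightarrow> (nat \<Rightarrow> nat \<Rightarrow> nat \<Rightarrow> real) \<Rightarrow> node \<Rightarrow> node set \<Rightarrow> node set" where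
  "anc_not N p Phi Y Xs = anc N p Phi Y - (Xs \<union> des N p Phi Xs)"

text \<open>Gaussian random variable (a degenerate, i.e. a.s. constant, variable is
  counted as Gaussian with variance 0).\<close>
definition gaussian_rv :: "'a measure \<Rightarrow> ('a \<Rightarrow> real) \<Rightarrow> bool" where
  "gaussian_rv M Z \<longleftrightarrow> Z \<in> borel_measurable M \<and>
     ((\<exists>\<mu> \<sigma>. 0 < \<sigma> \<and> distributed M lborel Z (normal_density \<mu> \<sigma>)) \<or> (\<exists>c. AE \<omega> in M. Z \<omega> = c))"

definition var_rhs :: "nat \<Rightarrow> nat \<Rightarrow> (nat \<Rightarrow> nat \<Rightarrow> nat \<Rightarrow> real) \<Rightarrow> (node \<Rightarrow> real) \<Rightarrow> node \<Rightarrow> real" where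
  "var_rhs N p Phi x v = (\<Sum>k\<in>{1..p}. \<Sum>j<N. Phi k (fst v) j * x (j, snd v - int k))"

definition var_stable :: "nat \<Rightarrow> nat \<Rightarrow> (nat \<Rightarrow> nat \<Rightarrow> nat \<Rightarrow> real) \<Rightarrow> bool" where
  "var_stable N p Phi \<longleftrightarrow> (\<forall>z::complex. cmod z \<le> 1 \<longrightarrow>
     det (mat N N (\<lambda>(l, k). (if l = k then 1 else 0)
        - (\<Sum>s\<in>{1..p}. z ^ s * complex_of_real (Phi s l k)))) \<noteq> 0)"

definition gaussian_white_noise :: "'a measure \<Rightarrow> nat \<Rightarrow> (node \<Rightarrow> 'a \<Rightarrow> real) \<Rightarrow> bool" where
  "gaussian_white_noise M N eta \<longleftrightarrow>
     (\<exists>\<sigma>::nat \<Rightarrow> real. (\<forall>i<N. 0 < \<sigma> i) \<and>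
        (\<forall>v. fst v < N \<longrightarrow> distributed M lborel (eta v) (normal_density 0 (\<sigma> (fst v)))))
     \<and> prob_space.indep_vars M (\<lambda>_. borel) eta {v. fst v < N}"

definition weakly_stationary :: "'a measure \<Rightarrow> nat \<Rightarrow> (node \<Rightarrow> 'a \<Rightarrow> real) \<Rightarrow> bool" where
  "weakly_stationary M N X \<longleftrightarrow>
     (\<forall>v. fst v < N \<longrightarrow> X v \<in> borel_measurable M \<and> integrable M (\<lambda>\<omega>. (X v \<omega>)\<^sup>2)) \<and>
     (\<forall>i<N. \<forall>t. (\<integral>\<omega>. X (i, t) \<omega> \<partial>M) = (\<integral>\<omega>. X (i, 0) \<omega> \<partial>M)) \<and>
     (\<forall>i<N. \<forall>j<N. \<forall>t h. (\<integral>\<omega>. X (i, t + h) \<omega> * X (j, t) \<omega> \<partial>M) = (\<integral>\<omega>. X (i, h) \<omega> * X (j, 0) \<omega> \<partial>M))"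

definition stationary_VAR :: "'a measure \<Rightarrow> nat \<Rightarrow> nat \<Rightarrow> (nat \<Rightarrow> nat \<Rightarrow> nat \<Rightarrow> real)
    \<Rightarrow> (node \<Rightarrow> 'a \<Rightarrow> real) \<Rightarrow> (node \<Rightarrow> 'a \<Rightarrow> real) \<Rightarrow> bool" where
  "stationary_VAR M N p Phi X eta \<longleftrightarrow>
     prob_space M \<and> var_stable N p Phi \<and> gaussian_white_noise M N eta \<and> weakly_stationary M N X \<and>
     (\<forall>v. fst v < N \<longrightarrow> (AE \<omega> in M. X v \<omega> = var_rhs N p Phi (\<lambda>u. X u \<omega>) v + eta v \<omega>))"

text \<open>Xi is (a version of) the process after the intervention do(Xs(l)) := x l, l < length Xs:
  the equations of the intervened nodes are replaced by constants, all other
  equations and the noise are unchanged; among the solutions of the modified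
  system we take the (unique) one with bounded second moments.\<close>
definition intervened_process :: "'a measure \<Rightarrow> nat \<Rightarrow> nat \<Rightarrow> (nat \<Rightarrow> nat \<Rightarrow> nat \<Rightarrow> real)
    \<Rightarrow> (node \<Rightarrow> 'a \<Rightarrow> real) \<Rightarrow> node list \<Rightarrow> (nat \<Rightarrow> real) \<Rightarrow> (node \<Rightarrow> 'a \<Rightarrow> real) \<Rightarrow> bool" where
  "intervened_process M N p Phi eta Xs x Xi \<longleftrightarrow>
     (\<forall>v. fst v < N \<longrightarrow> Xi v \<in> borel_measurable M \<and> integrable M (\<lambda>\<omega>. (Xi v \<omega>)\<^sup>2)) \<and>
     (\<exists>B. \<forall>v. fst v < N \<longrightarrow> (\<integral>\<omega>. (Xi v \<omega>)\<^sup>2 \<partial>M) \<le> B) \<and>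
     (\<forall>l<length Xs. \<forall>\<omega>\<in>space M. Xi (Xs ! l) \<omega> = x l) \<and>
     (\<forall>v. fst v < N \<longrightarrow> v \<notin> set Xs \<longrightarrow> (AE \<omega> in M. Xi v \<omega> = var_rhs N p Phi (\<lambda>u. Xi u \<omega>) v + eta v \<omega>))"

end

theory Submission
  imports Defs "Jordan_Normal_Form.Spectral_Radius"
begin

definition compmat :: "nat \<Rightarrow> nat \<Rightarrow> (nat \<Rightarrow> nat \<Rightarrow> nat \<Rightarrow> real) \<Rightarrow> real mat" where
  "compmat N p Phi = mat (N*p) (N*p) (\<lambda>(a,b). if a < N then Phi (b div N + 1) a (b mod N)
      else if b + N = a then 1 else 0)"

definition stk :: "nat \<Rightarrow> nat \<Rightarrow> (node \<Rightarrow> real) \<Rightarrow> int \<Rightarrow> real vec" where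
  "stk N p f t = vec (N*p) (\<lambda>a. f (a mod N, t - int (a div N)))"

definition evec :: "nat \<Rightarrow> nat \<Rightarrow> (node \<Rightarrow> real) \<Rightarrow> int \<Rightarrow> real vec" where
  "evec N p e t = vec (N*p) (\<lambda>a. if a < N then e (a, t) else 0)"

definition noise :: "nat \<Rightarrow> nat \<Rightarrow> (nat \<Rightarrow> nat \<Rightarrow> nat \<Rightarrow> real) \<Rightarrow> (node \<Rightarrow> real) \<Rightarrow> int \<Rightarrow> nat \<Rightarrow> real vec" where
  "noise N p Phi e t k = vec (N*p) (\<lambda>a. \<Sum>j<k. \<Sum>b<N. (compmat N p Phi ^\<^sub>m j) $$ (a,b) * e (b, t - int j))"

lemma compmat_carrier[simp]: "compmat N p Phi \<in> carrier_mat (N*p) (N*p)"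
  by (simp add: compmat_def)

lemma sum_blocks: "(\<Sum>b<N*p. g b) = (\<Sum>r<p. \<Sum>j<N. g (r*N + j))" for g :: "nat \<Rightarrow> 'b::comm_monoid_add"
proof (induct p)
  case 0 then show ?case by simp
next
  case (Suc p)
  have e: "{..<N * Suc p} = {..<N*p} \<union> {N*p..<N*p+N}" by auto
  have "(\<Sum>b<N*Suc p. g b) = (\<Sum>b<N*p. g b) + (\<Sum>b\<in>{N*p..<N*p+N}. g b)"
    unfolding e by (rule sum.union_disjoint) auto
  also have "(\<Sum>b\<in>{N*p..<N*p+N}. g b) = (\<Sum>j<N. g (p*N + j))"
  proof -
    have "(\<Sum>b\<in>{0+N*p..<N+N*p}. g b) = (\<Sum>j\<in>{0..<N}. g (j + N*p))"
      by (rule sum.shift_bounds_nat_ivl)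
    then show ?thesis by (simp add: lessThan_atLeast0 add.commute mult.commute)
  qed
  finally show ?case using Suc by simp
qed

lemma var_rhs_alt: "var_rhs N p Phi f v = (\<Sum>r<p. \<Sum>j<N. Phi (r+1) (fst v) j * f (j, snd v - int (r+1)))"
  unfolding var_rhs_def
proof -
  have "{1..p} = {Suc 0..<Suc p}" by auto
  then show "(\<Sum>k\<in>{1..p}. \<Sum>j<N. Phi k (fst v) j * f (j, snd v - int k)) =
    (\<Sum>r<p. \<Sum>j<N. Phi (r+1) (fst v) j * f (j, snd v - int (r+1)))"
    by (simp only: sum.shift_bounds_Suc_ivl lessThan_atLeast0) simp
qed

lemma dim_compmat[simp]: "dim_row (compmat N p Phi) = N*p" "dim_col (compmat N p Phi) = N*p"
  by (auto simp: compmat_def)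

lemma stk_step:
  assumes eq: "\<And>i. i < N \<Longrightarrow> f (i,t) = var_rhs N p Phi f (i,t) + e (i,t)"
  shows "stk N p f t = compmat N p Phi *\<^sub>v stk N p f (t-1) + evec N p e t"
proof (rule eq_vecI)
  show "dim_vec (stk N p f t) = dim_vec (compmat N p Phi *\<^sub>v stk N p f (t - 1) + evec N p e t)"
    by (simp add: stk_def evec_def compmat_def)
  fix a assume "a < dim_vec (compmat N p Phi *\<^sub>v stk N p f (t - 1) + evec N p e t)"
  then have a: "a < N*p" by (simp add: evec_def)
  have lhs: "stk N p f t $ a = f (a mod N, t - int (a div N))" using a by (simp add: stk_def)
  have prod: "(compmat N p Phi *\<^sub>v stk N p f (t - 1)) $ a =
     (\<Sum>b<N*p. compmat N p Phi $$ (a,b) * f (b mod N, t - 1 - int (b div N)))"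
    using a by (simp add: compmat_def stk_def scalar_prod_def lessThan_atLeast0)
  show "stk N p f t $ a = (compmat N p Phi *\<^sub>v stk N p f (t - 1) + evec N p e t) $ a"
  proof (cases "a < N")
    case True
    have "(\<Sum>b<N*p. compmat N p Phi $$ (a,b) * f (b mod N, t - 1 - int (b div N)))
       = (\<Sum>r<p. \<Sum>j<N. compmat N p Phi $$ (a,r*N+j) * f ((r*N+j) mod N, t - 1 - int ((r*N+j) div N)))"
      by (rule sum_blocks)
    also have "\<dots> = (\<Sum>r<p. \<Sum>j<N. Phi (r+1) a j * f (j, t - int (r+1)))"
    proof (intro sum.cong refl)
      fix r j assume r: "r \<in> {..<p}" and j: "j \<in> {..<N}"
      have rj: "r*N + j < N*p"
      proof -
        have "r*N + j < r*N + N" using j by simp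
        also have "\<dots> = (r+1)*N" by simp
        also have "\<dots> \<le> p*N" using r by (intro mult_right_mono) auto
        finally show ?thesis by (simp add: mult.commute)
      qed
      have d: "(r*N+j) div N = r" and m: "(r*N+j) mod N = j" using j by auto
      show "compmat N p Phi $$ (a,r*N+j) * f ((r*N+j) mod N, t - 1 - int ((r*N+j) div N))
          = Phi (r+1) a j * f (j, t - int (r+1))"
        using a rj True j by (simp add: compmat_def algebra_simps)
    qed
    also have "\<dots> = var_rhs N p Phi f (a,t)" by (simp add: var_rhs_alt)
    finally show ?thesis using True a lhs prod eq[OF True] by (simp add: evec_def)
  next
    case False
    have "(\<Sum>b<N*p. compmat N p Phi $$ (a,b) * f (b mod N, t - 1 - int (b div N)))
        = (\<Sum>b<N*p. if b = a - N then f (b mod N, t - 1 - int (b div N)) else 0)"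
      by (intro sum.cong refl) (use a False in \<open>auto simp: compmat_def\<close>)
    also have "\<dots> = f ((a-N) mod N, t - 1 - int ((a-N) div N))" using a by simp
    also have "\<dots> = f (a mod N, t - int (a div N))"
    proof -
      have "(a-N) mod N = a mod N" using False by (simp add: le_mod_geq)
      moreover have "a div N = Suc ((a-N) div N)" using False
      proof -
        have N0: "N > 0" using a by (cases N) auto
        have "a div N = ((a - N) + N) div N" using False by simp
        also have "\<dots> = (a - N) div N + 1" using N0 by simp
        finally have "a div N = (a - N) div N + 1" .
        then show ?thesis by simp
      qed
      ultimately show ?thesis by (simp add: diff_diff_eq)
    qed
    finally show ?thesis using False a lhs prod by (simp add: evec_def)
  qed
qed

lemma stk_iter:
  assumes eq: "\<And>i s. i < N \<Longrightarrow> t - int k < s \<Longrightarrow> s \<le> t \<Longrightarrow> f (i,s) = var_rhs N p Phi f (i,s) + e (i,s)"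
  shows "stk N p f t = (compmat N p Phi ^\<^sub>m k) *\<^sub>v stk N p f (t - int k) + noise N p Phi e t k"
  using eq
proof (induct k)
  case 0
  have "1\<^sub>m (N*p) *\<^sub>v stk N p f t = stk N p f t" by (simp add: stk_def)
  moreover have "noise N p Phi e t 0 = 0\<^sub>v (N*p)" by (simp add: noise_def zero_vec_def)
  moreover have "stk N p f t \<in> carrier_vec (N*p)" by (simp add: stk_def)
  ultimately show ?case by simp
next
  case (Suc k)
  let ?A = "compmat N p Phi"
  have IH: "stk N p f t = (?A ^\<^sub>m k) *\<^sub>v stk N p f (t - int k) + noise N p Phi e t k"
    using Suc by auto
  have st: "stk N p f (t - int k) = ?A *\<^sub>v stk N p f (t - int k - 1) + evec N p e (t - int k)"
    by (rule stk_step) (use Suc.prems in auto)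
  have c1: "stk N p f s \<in> carrier_vec (N*p)" for s by (simp add: stk_def)
  have c2: "evec N p e s \<in> carrier_vec (N*p)" for s by (simp add: evec_def)
  have Ak: "?A ^\<^sub>m k \<in> carrier_mat (N*p) (N*p)" by simp
  have c5: "?A *\<^sub>v w \<in> carrier_vec (N*p)" for w by (rule carrier_vecI) simp
  have "(?A ^\<^sub>m k) *\<^sub>v stk N p f (t - int k) = (?A ^\<^sub>m k) *\<^sub>v (?A *\<^sub>v stk N p f (t - int k - 1)) + (?A ^\<^sub>m k) *\<^sub>v evec N p e (t - int k)"
    unfolding st by (rule mult_add_distrib_mat_vec[OF Ak]) (simp_all add: c1 c2 c5)
  also have "(?A ^\<^sub>m k) *\<^sub>v (?A *\<^sub>v stk N p f (t - int k - 1)) = (?A ^\<^sub>m Suc k) *\<^sub>v stk N p f (t - int (Suc k))"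
    by (simp add: assoc_mult_mat_vec[OF Ak compmat_carrier c1, symmetric] algebra_simps)
  finally have 1: "(?A ^\<^sub>m k) *\<^sub>v stk N p f (t - int k) = (?A ^\<^sub>m Suc k) *\<^sub>v stk N p f (t - int (Suc k)) + (?A ^\<^sub>m k) *\<^sub>v evec N p e (t - int k)" .
  have 2: "noise N p Phi e t (Suc k) = (?A ^\<^sub>m k) *\<^sub>v evec N p e (t - int k) + noise N p Phi e t k"
  proof (rule eq_vecI)
    show "dim_vec (noise N p Phi e t (Suc k)) = dim_vec ((?A ^\<^sub>m k) *\<^sub>v evec N p e (t - int k) + noise N p Phi e t k)"
      by (simp add: noise_def)
    fix a assume "a < dim_vec ((?A ^\<^sub>m k) *\<^sub>v evec N p e (t - int k) + noise N p Phi e t k)"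
    then have a: "a < N*p" by (simp add: noise_def)
    then have p: "p \<ge> 1" by (cases p) auto
    have "((?A ^\<^sub>m k) *\<^sub>v evec N p e (t - int k)) $ a = (\<Sum>b<N*p. (?A ^\<^sub>m k) $$ (a,b) * (if b < N then e (b, t - int k) else 0))"
      using a by (simp add: scalar_prod_def evec_def lessThan_atLeast0)
    also have "\<dots> = (\<Sum>b<N. (?A ^\<^sub>m k) $$ (a,b) * e (b, t - int k))"
    proof -
      have "{..<N} \<subseteq> {..<N*p}" using p by (auto intro: order.trans[of _ N] simp: less_le_trans)
      then show ?thesis
        by (intro sum.mono_neutral_cong_right) auto
    qed
    finally show "noise N p Phi e t (Suc k) $ a = ((?A ^\<^sub>m k) *\<^sub>v evec N p e (t - int k) + noise N p Phi e t k) $ a"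
      using a by (simp add: noise_def)
  qed
  have c3: "noise N p Phi e t j \<in> carrier_vec (N*p)" for j by (simp add: noise_def)
  have c4: "(?A ^\<^sub>m j) *\<^sub>v v \<in> carrier_vec (N*p)" for j v by (rule carrier_vecI) simp
  have "stk N p f t = ((?A ^\<^sub>m Suc k) *\<^sub>v stk N p f (t - int (Suc k)) + (?A ^\<^sub>m k) *\<^sub>v evec N p e (t - int k)) + noise N p Phi e t k"
    using IH 1 by simp
  also have "\<dots> = (?A ^\<^sub>m Suc k) *\<^sub>v stk N p f (t - int (Suc k)) + ((?A ^\<^sub>m k) *\<^sub>v evec N p e (t - int k) + noise N p Phi e t k)"
    by (rule assoc_add_vec[OF c4 c4 c3])
  finally show ?case using 2 by simp
qed

lemma rep_entry:
  assumes eq: "\<And>i s. i < N \<Longrightarrow> t - int k < s \<Longrightarrow> s \<le> t \<Longrightarrow> f (i,s) = var_rhs N p Phi f (i,s) + e (i,s)"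
    and i: "i < N" and p: "p \<ge> 1"
  shows "f (i,t) = (\<Sum>b<N*p. (compmat N p Phi ^\<^sub>m k) $$ (i,b) * f (b mod N, t - int k - int (b div N)))
     + (\<Sum>j<k. \<Sum>b<N. (compmat N p Phi ^\<^sub>m j) $$ (i,b) * e (b, t - int j))"
proof -
  have "N \<le> N*p" using p by simp
  then have iN: "i < N*p" using i by linarith
  have "f (i,t) = stk N p f t $ i" using iN i by (simp add: stk_def)
  also have "\<dots> = ((compmat N p Phi ^\<^sub>m k) *\<^sub>v stk N p f (t - int k) + noise N p Phi e t k) $ i"
    using stk_iter[OF eq] by simp
  also have "\<dots> = (\<Sum>b<N*p. (compmat N p Phi ^\<^sub>m k) $$ (i,b) * f (b mod N, t - int k - int (b div N)))
     + (\<Sum>j<k. \<Sum>b<N. (compmat N p Phi ^\<^sub>m j) $$ (i,b) * e (b, t - int j))"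
    using iN by (simp add: noise_def stk_def scalar_prod_def lessThan_atLeast0 pow_mat_dim_square[OF compmat_carrier])
  finally show ?thesis .
qed

lemma pow_smult_mat:
  assumes A: "A \<in> carrier_mat n n"
  shows "(x \<cdot>\<^sub>m A) ^\<^sub>m k = (x ^ k :: 'a :: comm_ring_1) \<cdot>\<^sub>m (A ^\<^sub>m k)"
proof (induct k)
  case 0 then show ?case using A by (auto intro!: eq_matI)
next
  case (Suc k)
  have "(x \<cdot>\<^sub>m A) ^\<^sub>m Suc k = (x ^ k \<cdot>\<^sub>m (A ^\<^sub>m k)) * (x \<cdot>\<^sub>m A)" using Suc by simp
  also have "\<dots> = x ^ k \<cdot>\<^sub>m ((A ^\<^sub>m k) * (x \<cdot>\<^sub>m A))"
    by (rule mult_smult_assoc_mat[of _ n n _ n]) (use A in auto)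
  also have "(A ^\<^sub>m k) * (x \<cdot>\<^sub>m A) = x \<cdot>\<^sub>m ((A ^\<^sub>m k) * A)"
    by (rule mult_smult_distrib[of _ n n _ n]) (use A in auto)
  finally show ?case using A by (auto intro!: eq_matI simp: mult.assoc mult.commute)
qed

lemma compmat_eig:
  assumes st: "var_stable N p Phi"
    and ev: "eigenvalue (map_mat complex_of_real (compmat N p Phi)) lam"
  shows "cmod lam < 1"
proof (rule ccontr)
  assume "\<not> cmod lam < 1"
  then have l1: "cmod lam \<ge> 1" by simp
  then have l0: "lam \<noteq> 0" by auto
  define Ac where "Ac = map_mat complex_of_real (compmat N p Phi)"
  define n where "n = N*p"
  define z where "z = 1 / lam"
  have z1: "cmod z \<le> 1" using l1 by (simp add: z_def norm_divide divide_le_eq_1)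
  from ev obtain v where v: "v \<in> carrier_vec n" "v \<noteq> 0\<^sub>v n" "Ac *\<^sub>v v = lam \<cdot>\<^sub>v v"
    unfolding eigenvalue_def eigenvector_def Ac_def n_def by auto
  have row: "(Ac *\<^sub>v v) $ a = (\<Sum>b<n. complex_of_real (compmat N p Phi $$ (a,b)) * v $ b)" if "a < n" for a
    using that v(1) by (simp add: Ac_def n_def scalar_prod_def lessThan_atLeast0)
  have ev_a: "lam * v $ a = (\<Sum>b<n. complex_of_real (compmat N p Phi $$ (a,b)) * v $ b)" if "a < n" for a
  proof -
    have "lam * v $ a = (Ac *\<^sub>v v) $ a" using v(3) that v(1) by simp
    then show ?thesis using row[OF that] by simp
  qed
  have shift: "lam * v $ a = v $ (a - N)" if "a < n" "\<not> a < N" for a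
  proof -
    have "(\<Sum>b<n. complex_of_real (compmat N p Phi $$ (a,b)) * v $ b) = (\<Sum>b<n. if b = a - N then v $ b else 0)"
      by (intro sum.cong refl) (use that in \<open>auto simp: compmat_def n_def\<close>)
    also have "\<dots> = v $ (a - N)" using that by simp
    finally show ?thesis using ev_a[OF that(1)] by simp
  qed
  have blk: "\<forall>a<n. a div N = q \<longrightarrow> v $ a = z ^ q * v $ (a mod N)" for q
  proof (induct q)
    case 0 then show ?case by (auto simp: div_eq_0_iff)
  next
    case (Suc q)
    show ?case
    proof (intro allI impI)
      fix a assume a: "a < n" "a div N = Suc q"
      then have N0: "N > 0" by (cases N) auto
      have aN: "\<not> a < N" using a by auto
      have "a div N = ((a - N) + N) div N" using aN by simp
      also have "\<dots> = (a - N) div N + 1" using N0 by simp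
      finally have d: "(a - N) div N = q" using a by simp
      have m: "(a - N) mod N = a mod N" using aN by (simp add: le_mod_geq)
      have "v $ a = z * v $ (a - N)" using shift[OF a(1) aN] l0 by (simp add: z_def field_simps)
      also have "v $ (a - N) = z ^ q * v $ (a mod N)" using Suc a d m by auto
      finally show "v $ a = z ^ Suc q * v $ (a mod N)" by (simp add: mult.assoc)
    qed
  qed
  then have blk': "v $ a = z ^ (a div N) * v $ (a mod N)" if "a < n" for a using that by blast
  define u where "u = vec N (\<lambda>j. v $ j)"
  have p1: "p \<ge> 1" and N0: "N > 0"
  proof -
    have "n > 0" using v by (cases n) auto
    then show "p \<ge> 1" "N > 0" by (auto simp: n_def)
  qed
  have Nn: "N \<le> n" using p1 by (simp add: n_def)
  have u0: "u \<noteq> 0\<^sub>v N"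
  proof
    assume "u = 0\<^sub>v N"
    then have "v $ j = 0" if "j < N" for j
    proof -
      have "v $ j = u $ j" using that by (simp add: u_def)
      then show ?thesis using \<open>u = 0\<^sub>v N\<close> that by simp
    qed
    then have "v $ a = 0" if "a < n" for a using blk'[OF that] N0 by simp
    then have "v = 0\<^sub>v n" using v(1) by (auto intro!: eq_vecI)
    then show False using v(2) by simp
  qed
  define Mz where "Mz = mat N N (\<lambda>(l, k). (if l = k then 1 else 0)
        - (\<Sum>s\<in>{1..p}. z ^ s * complex_of_real (Phi s l k)))"
  have "Mz *\<^sub>v u = 0\<^sub>v N"
  proof (rule eq_vecI)
    fix a assume "a < dim_vec (0\<^sub>v N :: complex vec)"
    then have a: "a < N" by simp
    have an: "a < n" using a Nn by simp
    have "lam * v $ a = (\<Sum>b<n. complex_of_real (compmat N p Phi $$ (a,b)) * v $ b)" by (rule ev_a[OF an])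
    also have "\<dots> = (\<Sum>r<p. \<Sum>j<N. complex_of_real (compmat N p Phi $$ (a,r*N+j)) * v $ (r*N+j))"
      unfolding n_def by (rule sum_blocks)
    also have "\<dots> = (\<Sum>r<p. \<Sum>j<N. complex_of_real (Phi (r+1) a j) * (z^r * v $ j))"
    proof (intro sum.cong refl)
      fix r j assume r: "r \<in> {..<p}" and j: "j \<in> {..<N}"
      have rj: "r*N + j < N*p"
      proof -
        have "r*N + j < r*N + N" using j by simp
        also have "\<dots> = (r+1)*N" by simp
        also have "\<dots> \<le> p*N" using r by (intro mult_right_mono) auto
        finally show ?thesis by (simp add: mult.commute)
      qed
      have d: "(r*N+j) div N = r" and m: "(r*N+j) mod N = j" using j by auto
      have "v $ (r*N+j) = z^r * v $ j" using blk'[of "r*N+j"] rj d m by (simp add: n_def)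
      moreover have "compmat N p Phi $$ (a,r*N+j) = Phi (r+1) a j" using an rj j a by (simp add: compmat_def n_def)
      ultimately show "complex_of_real (compmat N p Phi $$ (a,r*N+j)) * v $ (r*N+j) = complex_of_real (Phi (r+1) a j) * (z^r * v $ j)"
        by simp
    qed
    finally have e1: "lam * v $ a = (\<Sum>r<p. \<Sum>j<N. complex_of_real (Phi (r+1) a j) * (z^r * v $ j))" .
    have "v $ a = z * (lam * v $ a)" using l0 by (simp add: z_def)
    also have "\<dots> = (\<Sum>r<p. \<Sum>j<N. z^(r+1) * complex_of_real (Phi (r+1) a j) * v $ j)"
      unfolding e1 by (simp add: sum_distrib_left algebra_simps)
    also have "\<dots> = (\<Sum>s\<in>{1..p}. \<Sum>j<N. z^s * complex_of_real (Phi s a j) * v $ j)"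
    proof -
      have "{1..p} = {Suc 0..<Suc p}" by auto
      then show ?thesis by (simp only: sum.shift_bounds_Suc_ivl lessThan_atLeast0) simp
    qed
    finally have e2: "v $ a = (\<Sum>s\<in>{1..p}. \<Sum>j<N. z^s * complex_of_real (Phi s a j) * v $ j)" .
    have "(Mz *\<^sub>v u) $ a = (\<Sum>k<N. ((if a = k then 1 else 0) - (\<Sum>s\<in>{1..p}. z ^ s * complex_of_real (Phi s a k))) * v $ k)"
      using a by (simp add: Mz_def u_def scalar_prod_def lessThan_atLeast0)
    also have "\<dots> = (\<Sum>k<N. (if a = k then 1 else 0) * v $ k) - (\<Sum>k<N. (\<Sum>s\<in>{1..p}. z ^ s * complex_of_real (Phi s a k)) * v $ k)"
      by (simp only: left_diff_distrib sum_subtractf)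
    also have "\<dots> = v $ a - (\<Sum>s\<in>{1..p}. \<Sum>k<N. z ^ s * complex_of_real (Phi s a k) * v $ k)"
    proof -
      have "(\<Sum>k<N. (if a = k then 1 else 0) * v $ k) = (\<Sum>k<N. (if a = k then v $ k else 0))"
        by (intro sum.cong refl) simp
      also have "\<dots> = v $ a" using a by simp
      finally have f1: "(\<Sum>k<N. (if a = k then 1 else 0) * v $ k) = v $ a" .
      have "(\<Sum>k<N. (\<Sum>s\<in>{1..p}. z ^ s * complex_of_real (Phi s a k)) * v $ k) = (\<Sum>k<N. \<Sum>s\<in>{1..p}. z ^ s * complex_of_real (Phi s a k) * v $ k)"
        by (simp add: sum_distrib_right)
      also have "\<dots> = (\<Sum>s\<in>{1..p}. \<Sum>k<N. z ^ s * complex_of_real (Phi s a k) * v $ k)"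
        by (rule sum.swap)
      finally have f2: "(\<Sum>k<N. (\<Sum>s\<in>{1..p}. z ^ s * complex_of_real (Phi s a k)) * v $ k) = (\<Sum>s\<in>{1..p}. \<Sum>k<N. z ^ s * complex_of_real (Phi s a k) * v $ k)" .
      show ?thesis by (simp only: f1 f2)
    qed
    also have "\<dots> = 0" using e2 by simp
    finally show "(Mz *\<^sub>v u) $ a = (0\<^sub>v N) $ a" using a by simp
  qed (simp add: Mz_def)
  moreover have "u \<in> carrier_vec N" by (simp add: u_def)
  ultimately have "Determinant.det Mz = 0"
    using u0 by (subst det_0_iff_vec_prod_zero_field[of _ N]) (auto simp: Mz_def)
  moreover have "Determinant.det Mz \<noteq> 0" using st z1 unfolding var_stable_def Mz_def by blast
  ultimately show False by simp
qed

lemma compmat_decay: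
  assumes st: "var_stable N p Phi"
  shows "\<exists>c r. 0 \<le> c \<and> 0 < r \<and> r < 1 \<and>
     (\<forall>k a b. a < N*p \<longrightarrow> b < N*p \<longrightarrow> \<bar>(compmat N p Phi ^\<^sub>m k) $$ (a,b)\<bar> \<le> c * r^k)"
proof (cases "N*p = 0")
  case True then show ?thesis by (intro exI[of _ 0] exI[of _ "1/2"]) auto
next
  case False
  define n where "n = N*p"
  have n0: "n > 0" using False by (simp add: n_def)
  define A where "A = compmat N p Phi"
  define Ac where "Ac = map_mat complex_of_real A"
  have A: "A \<in> carrier_mat n n" by (simp add: A_def n_def)
  have Ac: "Ac \<in> carrier_mat n n" using A by (simp add: Ac_def)
  define rho where "rho = spectral_radius Ac"
  have "rho \<in> norm ` spectrum Ac" using spectral_radius_mem_max(1)[OF Ac n0] by (simp add: rho_def)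
  then obtain l where l: "eigenvalue Ac l" "rho = cmod l" by (auto simp: spectrum_def)
  have rho1: "rho < 1" using compmat_eig[OF st, of l] l by (simp add: Ac_def A_def)
  have rho0: "rho \<ge> 0" using l by simp
  define r where "r = (rho + 1) / 2"
  have r0: "r > 0" and r1: "r < 1" and rr: "rho < r" using rho0 rho1 by (auto simp: r_def)
  define B where "B = complex_of_real (1/r) \<cdot>\<^sub>m Ac"
  have B: "B \<in> carrier_mat n n" using Ac by (simp add: B_def)
  have AcB: "Ac = complex_of_real r \<cdot>\<^sub>m B" using r0 Ac
    by (auto intro!: eq_matI simp: B_def)
  have "spectral_radius B < 1"
  proof -
    have "spectral_radius B \<in> norm ` spectrum B" using spectral_radius_mem_max(1)[OF B n0] .
    then obtain mu w where w: "eigenvector B w mu" "spectral_radius B = cmod mu"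
      by (auto simp: spectrum_def eigenvalue_def)
    have wc: "w \<in> carrier_vec n" using w B by (auto simp: eigenvector_def)
    have "Ac *\<^sub>v w = complex_of_real r \<cdot>\<^sub>v (B *\<^sub>v w)"
      unfolding AcB using B wc by (auto intro!: eq_vecI simp: scalar_prod_def algebra_simps sum_distrib_left)
    also have "B *\<^sub>v w = mu \<cdot>\<^sub>v w" using w by (simp add: eigenvector_def)
    finally have "Ac *\<^sub>v w = (complex_of_real r * mu) \<cdot>\<^sub>v w" by (simp add: smult_smult_assoc)
    then have "eigenvector Ac w (complex_of_real r * mu)" using w Ac B by (auto simp: eigenvector_def)
    then have "eigenvalue Ac (complex_of_real r * mu)" by (auto simp: eigenvalue_def)
    then have "cmod (complex_of_real r * mu) \<le> rho"
      using spectral_radius_mem_max(2)[OF Ac n0] by (auto simp: rho_def spectrum_def)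
    then have "r * cmod mu \<le> rho" using r0 by (simp add: norm_mult)
    then have "r * cmod mu < r" using rr by simp
    then have "cmod mu < 1" using r0 by simp
    then show ?thesis using w by simp
  qed
  from spectral_radius_jnf_norm_bound_less_1_upper_triangular[OF B this]
  obtain c where c: "\<And>k. norm_bound (B ^\<^sub>m k) c" by auto
  have "norm_bound (B ^\<^sub>m 0) c" by (rule c)
  then have nb: "\<forall>i j. i < dim_row (B ^\<^sub>m 0) \<longrightarrow> j < dim_col (B ^\<^sub>m 0) \<longrightarrow> cmod ((B ^\<^sub>m 0) $$ (i,j)) \<le> c"
    unfolding norm_bound_def by blast
  have "1 \<le> c" using nb[rule_format, of 0 0] n0 B by simp
  then have c0: "c \<ge> 0" by simp
  have main: "\<forall>k a b. a < N*p \<longrightarrow> b < N*p \<longrightarrow> \<bar>(compmat N p Phi ^\<^sub>m k) $$ (a,b)\<bar> \<le> c * r^k"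
  proof (intro allI impI)
    fix k a b assume a: "a < N*p" and b: "b < N*p"
    have "Ac ^\<^sub>m k = map_mat complex_of_real (A ^\<^sub>m k)"
      unfolding Ac_def by (rule of_real_hom.mat_hom_pow[OF A, symmetric])
    then have "complex_of_real ((A ^\<^sub>m k) $$ (a,b)) = (Ac ^\<^sub>m k) $$ (a,b)"
      using a b A by (simp add: n_def)
    also have "Ac ^\<^sub>m k = complex_of_real r ^ k \<cdot>\<^sub>m (B ^\<^sub>m k)" unfolding AcB by (rule pow_smult_mat[OF B])
    finally have "complex_of_real ((A ^\<^sub>m k) $$ (a,b)) = complex_of_real r ^ k * (B ^\<^sub>m k) $$ (a,b)"
      using a b B by (simp add: n_def)
    then have "cmod (complex_of_real ((A ^\<^sub>m k) $$ (a,b))) = cmod (complex_of_real r ^ k * (B ^\<^sub>m k) $$ (a,b))"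
      by simp
    then have "\<bar>(A ^\<^sub>m k) $$ (a,b)\<bar> = r ^ k * cmod ((B ^\<^sub>m k) $$ (a,b))"
      using r0 by (simp add: norm_mult norm_power)
    also have "\<dots> \<le> r ^ k * c"
      using c[of k] a b B r0 unfolding norm_bound_def by (intro mult_left_mono) (auto simp: n_def)
    finally show "\<bar>(compmat N p Phi ^\<^sub>m k) $$ (a,b)\<bar> \<le> c * r^k" by (simp add: A_def mult.commute)
  qed
  show ?thesis using main c0 r0 r1 by blast
qed

lemma distr_borel_lborel: "distr M borel f = distr M lborel f"
  by (rule distr_cong) auto

lemma iexp_diff_le: "cmod (iexp a - iexp b) \<le> \<bar>a - b\<bar>"
proof -
  have e: "iexp b * iexp (a - b) = iexp a"
    by (simp add: exp_add[symmetric] algebra_simps)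
  have "iexp a - iexp b = iexp b * (iexp (a - b) - 1)" using e by (simp add: algebra_simps)
  then have "cmod (iexp a - iexp b) = cmod (iexp (a - b) - 1)"
    by (simp add: norm_mult)
  also have "\<dots> = 2 * \<bar>sin ((a - b) / 2)\<bar>" by (rule dist_exp_i_1)
  also have "\<dots> \<le> 2 * \<bar>(a - b) / 2\<bar>" using abs_sin_x_le_abs_x[of "(a - b) / 2"] by simp
  also have "\<dots> = \<bar>a - b\<bar>" by simp
  finally show ?thesis .
qed

context prob_space
begin

lemma char_normal0:
  assumes Y: "distributed M lborel Y (normal_density 0 s)" and s: "s > 0"
  shows "char (distr M borel Y) t = complex_of_real (exp (- (s * t)\<^sup>2 / 2))"
proof -
  have Ym: "Y \<in> borel_measurable M" using distributed_measurable[OF Y] by simp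
  have Z: "distributed M lborel (\<lambda>x. (Y x - 0) / s) std_normal_density"
    using Y normal_standard_normal_convert[OF s] by simp
  have Zm: "(\<lambda>x. Y x / s) \<in> borel_measurable M" using Ym by simp
  have "char (distr M borel Y) t = (CLINT x|M. iexp (t * Y x))"
    using Ym by (simp add: char_def integral_distr)
  also have "\<dots> = (CLINT x|M. iexp ((t * s) * (Y x / s)))" using s by simp
  also have "\<dots> = char (distr M borel (\<lambda>x. Y x / s)) (t * s)"
  proof -
    have "char (distr M borel (\<lambda>x. Y x / s)) (t * s) = (CLINT x|M. iexp ((t * s) * (Y x / s)))"
      unfolding char_def by (rule integral_distr[OF Zm]) simp
    then show ?thesis by simp
  qed
  also have "distr M borel (\<lambda>x. Y x / s) = std_normal_distribution"
    using Z unfolding distributed_def distr_borel_lborel by simp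
  also have "char std_normal_distribution (t * s) = complex_of_real (exp (- (t * s)\<^sup>2 / 2))"
    by (simp add: char_std_normal_distribution)
  finally show ?thesis by (simp add: mult.commute)
qed

lemma FL_char:
  assumes gwn: "gaussian_white_noise M N eta" and W: "finite W" "\<forall>w\<in>W. fst w < N"
  shows "\<exists>s\<ge>0. \<forall>t. char (distr M borel (\<lambda>\<omega>. \<Sum>w\<in>W. c w * eta w \<omega>)) t = complex_of_real (exp (-(s * t)\<^sup>2/2))"
proof -
  obtain \<sigma> where \<sigma>: "\<forall>i<N. 0 < \<sigma> i" "\<forall>v. fst v < N \<longrightarrow> distributed M lborel (eta v) (normal_density 0 (\<sigma> (fst v)))"
    and ind: "indep_vars (\<lambda>_. borel) eta {v. fst v < N}"
    using gwn unfolding gaussian_white_noise_def by blast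
  define W' where "W' = {w\<in>W. c w \<noteq> 0}"
  have eq: "(\<lambda>\<omega>. \<Sum>w\<in>W. c w * eta w \<omega>) = (\<lambda>\<omega>. \<Sum>w\<in>W'. c w * eta w \<omega>)"
    by (intro ext sum.mono_neutral_cong_right) (auto simp: W'_def W)
  show ?thesis
  proof (cases "W' = {}")
    case True
    have "char (distr M borel (\<lambda>\<omega>. \<Sum>w\<in>W. c w * eta w \<omega>)) t = 1" for t
      unfolding eq True by (simp add: char_def integral_distr prob_space integral_return)
    then show ?thesis by (intro exI[of _ 0]) auto
  next
    case False
    define X where "X w = (\<lambda>\<omega>. c w * eta w \<omega>)" for w
    have fin: "finite W'" using W by (simp add: W'_def)
    have sub: "W' \<subseteq> {v. fst v < N}" using W by (auto simp: W'_def)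
    have indW: "indep_vars (\<lambda>_. borel) X W'"
      unfolding X_def
      by (rule indep_vars_compose2[where X=eta and M'="\<lambda>_. borel"], rule indep_vars_subset[OF ind sub]) simp
    have pos: "0 < \<bar>c w\<bar> * \<sigma> (fst w)" if "w \<in> W'" for w
      using that \<sigma> W by (auto simp: W'_def)
    have nd: "distributed M lborel (X w) (normal_density 0 (\<bar>c w\<bar> * \<sigma> (fst w)))" if "w \<in> W'" for w
    proof -
      have "distributed M lborel (\<lambda>x. 0 + c w * eta w x) (normal_density (0 + c w * 0) (\<bar>c w\<bar> * \<sigma> (fst w)))"
        by (rule normal_density_affine) (use that \<sigma>(1) \<sigma>(2)[rule_format, of w] W in \<open>auto simp: W'_def\<close>)
      then show ?thesis by (simp add: X_def)
    qed
    have "distributed M lborel (\<lambda>x. \<Sum>w\<in>W'. X w x) (normal_density (\<Sum>w\<in>W'. 0) (sqrt (\<Sum>w\<in>W'. (\<bar>c w\<bar> * \<sigma> (fst w))\<^sup>2)))"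
      by (rule sum_indep_normal[OF fin False indW]) (use nd pos in auto)
    then have d: "distributed M lborel (\<lambda>x. \<Sum>w\<in>W'. X w x) (normal_density 0 (sqrt (\<Sum>w\<in>W'. (\<bar>c w\<bar> * \<sigma> (fst w))\<^sup>2)))"
      by simp
    define S where "S = sqrt (\<Sum>w\<in>W'. (\<bar>c w\<bar> * \<sigma> (fst w))\<^sup>2)"
    have S0: "S > 0" unfolding S_def
      by (intro real_sqrt_gt_zero sum_pos fin False zero_less_power pos)
    show ?thesis
      using char_normal0[OF d[folded S_def] S0] S0 unfolding eq X_def by (intro exI[of _ S]) auto
  qed
qed

lemma char_close:
  assumes X: "X \<in> borel_measurable M" and Y: "Y \<in> borel_measurable M"
    and int: "integrable M (\<lambda>\<omega>. \<bar>X \<omega> - Y \<omega>\<bar>)"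
  shows "cmod (char (distr M borel X) t - char (distr M borel Y) t) \<le> \<bar>t\<bar> * (\<integral>\<omega>. \<bar>X \<omega> - Y \<omega>\<bar> \<partial>M)"
proof -
  have iX: "integrable M (\<lambda>x. iexp (t * X x))" by (rule integrable_const_bound[of _ 1]) (use X in auto)
  have iY: "integrable M (\<lambda>x. iexp (t * Y x))" by (rule integrable_const_bound[of _ 1]) (use Y in auto)
  have "char (distr M borel X) t - char (distr M borel Y) t = (CLINT x|M. iexp (t * X x)) - (CLINT x|M. iexp (t * Y x))"
    using X Y by (simp add: char_def integral_distr)
  also have "\<dots> = (CLINT x|M. iexp (t * X x) - iexp (t * Y x))"
    by (rule Bochner_Integration.integral_diff[OF iX iY, symmetric])
  finally have "cmod (char (distr M borel X) t - char (distr M borel Y) t) = cmod (CLINT x|M. iexp (t * X x) - iexp (t * Y x))" by simp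
  also have "\<dots> \<le> (\<integral>x. cmod (iexp (t * X x) - iexp (t * Y x)) \<partial>M)" by (rule integral_norm_bound)
  also have "\<dots> \<le> (\<integral>x. \<bar>t\<bar> * \<bar>X x - Y x\<bar> \<partial>M)"
  proof (rule integral_mono)
    show "integrable M (\<lambda>x. cmod (iexp (t * X x) - iexp (t * Y x)))" using iX iY by auto
    show "integrable M (\<lambda>x. \<bar>t\<bar> * \<bar>X x - Y x\<bar>)" using int by auto
    fix x
    have "cmod (iexp (t * X x) - iexp (t * Y x)) \<le> \<bar>t * X x - t * Y x\<bar>" by (rule iexp_diff_le)
    also have "\<dots> = \<bar>t\<bar> * \<bar>X x - Y x\<bar>" by (simp add: abs_mult[symmetric] algebra_simps)
    finally show "cmod (iexp (t * X x) - iexp (t * Y x)) \<le> \<bar>t\<bar> * \<bar>X x - Y x\<bar>" .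
  qed
  also have "\<dots> = \<bar>t\<bar> * (\<integral>\<omega>. \<bar>X \<omega> - Y \<omega>\<bar> \<partial>M)" by simp
  finally show ?thesis .
qed

end

definition lc :: "(node \<Rightarrow> 'a \<Rightarrow> real) \<Rightarrow> node set \<Rightarrow> (node \<Rightarrow> real) \<Rightarrow> 'a \<Rightarrow> real" where
  "lc eta W c = (\<lambda>\<omega>. \<Sum>w\<in>W. c w * eta w \<omega>)"

definition GL :: "'a measure \<Rightarrow> nat \<Rightarrow> (node \<Rightarrow> 'a \<Rightarrow> real) \<Rightarrow> ('a \<Rightarrow> real) \<Rightarrow> bool" where
  "GL M N eta Z \<longleftrightarrow> Z \<in> borel_measurable M \<and> (\<forall>\<epsilon>>0. \<exists>W c. finite W \<and> (\<forall>w\<in>W. fst w < N) \<and>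
      integrable M (\<lambda>\<omega>. \<bar>Z \<omega> - lc eta W c \<omega>\<bar>) \<and> (\<integral>\<omega>. \<bar>Z \<omega> - lc eta W c \<omega>\<bar> \<partial>M) < \<epsilon>)"

lemma gwn_meas:
  assumes "gaussian_white_noise M N eta" "fst w < N"
  shows "eta w \<in> borel_measurable M"
proof -
  from assms(1) obtain \<sigma> :: "nat \<Rightarrow> real" where
    "\<forall>v. fst v < N \<longrightarrow> distributed M lborel (eta v) (normal_density 0 (\<sigma> (fst v)))"
    unfolding gaussian_white_noise_def by blast
  then have "distributed M lborel (eta w) (normal_density 0 (\<sigma> (fst w)))" using assms(2) by blast
  then have "eta w \<in> M \<rightarrow>\<^sub>M lborel" by (rule distributed_measurable)
  then show ?thesis by simp
qed

lemma lc_meas: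
  assumes "gaussian_white_noise M N eta" "\<forall>w\<in>W. fst w < N"
  shows "lc eta W c \<in> borel_measurable M"
proof -
  have m: "eta w \<in> borel_measurable M" if "w \<in> W" for w
    using gwn_meas[OF assms(1)] assms(2) that by blast
  show ?thesis unfolding lc_def by (auto intro!: borel_measurable_sum borel_measurable_times m)
qed

context prob_space
begin

lemma GL_gaussian:
  assumes gwn: "gaussian_white_noise M N eta" and Z: "GL M N eta Z"
  shows "gaussian_rv M Z"
proof -
  have Zm: "Z \<in> borel_measurable M" using Z by (simp add: GL_def)
  have "\<forall>k::nat. \<exists>Wc. finite (fst Wc) \<and> (\<forall>w\<in>fst Wc. fst w < N) \<and>
      integrable M (\<lambda>\<omega>. \<bar>Z \<omega> - lc eta (fst Wc) (snd Wc) \<omega>\<bar>) \<and>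
      (\<integral>\<omega>. \<bar>Z \<omega> - lc eta (fst Wc) (snd Wc) \<omega>\<bar> \<partial>M) < inverse (real (Suc k))"
  proof
    fix k :: nat
    have "inverse (real (Suc k)) > 0" by simp
    then obtain W c where "finite W \<and> (\<forall>w\<in>W. fst w < N) \<and>
      integrable M (\<lambda>\<omega>. \<bar>Z \<omega> - lc eta W c \<omega>\<bar>) \<and> (\<integral>\<omega>. \<bar>Z \<omega> - lc eta W c \<omega>\<bar> \<partial>M) < inverse (real (Suc k))"
      using Z unfolding GL_def by blast
    then show "\<exists>Wc. finite (fst Wc) \<and> (\<forall>w\<in>fst Wc. fst w < N) \<and>
      integrable M (\<lambda>\<omega>. \<bar>Z \<omega> - lc eta (fst Wc) (snd Wc) \<omega>\<bar>) \<and>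
      (\<integral>\<omega>. \<bar>Z \<omega> - lc eta (fst Wc) (snd Wc) \<omega>\<bar> \<partial>M) < inverse (real (Suc k))"
      by (intro exI[of _ "(W,c)"]) simp
  qed
  from choice[OF this] obtain Wc where Wc0: "\<forall>k. finite (fst (Wc k)) \<and> (\<forall>w\<in>fst (Wc k). fst w < N) \<and>
      integrable M (\<lambda>\<omega>. \<bar>Z \<omega> - lc eta (fst (Wc k)) (snd (Wc k)) \<omega>\<bar>) \<and>
      (\<integral>\<omega>. \<bar>Z \<omega> - lc eta (fst (Wc k)) (snd (Wc k)) \<omega>\<bar> \<partial>M) < inverse (real (Suc k))"
    by (erule exE)
  have Wc: "\<And>k. finite (fst (Wc k))" "\<And>k. \<forall>w\<in>fst (Wc k). fst w < N"
     "\<And>k. integrable M (\<lambda>\<omega>. \<bar>Z \<omega> - lc eta (fst (Wc k)) (snd (Wc k)) \<omega>\<bar>)"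
     "\<And>k. (\<integral>\<omega>. \<bar>Z \<omega> - lc eta (fst (Wc k)) (snd (Wc k)) \<omega>\<bar> \<partial>M) < inverse (real (Suc k))"
    using Wc0 by blast+
  define G where "G k = lc eta (fst (Wc k)) (snd (Wc k))" for k
  have Gm: "G k \<in> borel_measurable M" for k unfolding G_def by (rule lc_meas[OF gwn Wc(2)])
  have "\<forall>k. \<exists>s\<ge>0. \<forall>t. char (distr M borel (G k)) t = complex_of_real (exp (-(s * t)\<^sup>2/2))"
    using FL_char[OF gwn Wc(1) Wc(2)] unfolding G_def lc_def by blast
  from choice[OF this] obtain s where s00: "\<forall>k. s k \<ge> 0 \<and> (\<forall>t. char (distr M borel (G k)) t = complex_of_real (exp (-(s k * t)\<^sup>2/2)))"
    by (erule exE)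
  have s0: "\<And>k. s k \<ge> 0" and sc: "\<And>k t. char (distr M borel (G k)) t = complex_of_real (exp (-(s k * t)\<^sup>2/2))"
    using s00 by blast+
  define \<phi> where "\<phi> = char (distr M borel Z)"
  have RD: "real_distribution (distr M borel Z)" by (rule real_distribution_distr[OF Zm])
  have conv: "(\<lambda>k. complex_of_real (exp (-(s k * t)\<^sup>2/2))) \<longlonglongrightarrow> \<phi> t" for t
  proof -
    have "(\<lambda>k. char (distr M borel (G k)) t - \<phi> t) \<longlonglongrightarrow> 0"
    proof (rule Lim_null_comparison)
      show "\<forall>\<^sub>F k in sequentially. norm (char (distr M borel (G k)) t - \<phi> t) \<le> \<bar>t\<bar> * inverse (real (Suc k))"
      proof (rule always_eventually, rule allI)
        fix k
        have "norm (\<phi> t - char (distr M borel (G k)) t) \<le> \<bar>t\<bar> * (\<integral>\<omega>. \<bar>Z \<omega> - G k \<omega>\<bar> \<partial>M)"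
          unfolding \<phi>_def by (rule char_close[OF Zm Gm]) (use Wc(3) in \<open>simp add: G_def\<close>)
        also have "\<dots> \<le> \<bar>t\<bar> * inverse (real (Suc k))"
          using Wc(4)[of k] by (intro mult_left_mono) (auto simp: G_def)
        finally show "norm (char (distr M borel (G k)) t - \<phi> t) \<le> \<bar>t\<bar> * inverse (real (Suc k))"
          by (simp add: norm_minus_commute)
      qed
      show "(\<lambda>k. \<bar>t\<bar> * inverse (real (Suc k))) \<longlonglongrightarrow> 0"
        by (rule tendsto_mult_right_zero[OF LIMSEQ_inverse_real_of_nat])
    qed
    then have "(\<lambda>k. char (distr M borel (G k)) t) \<longlonglongrightarrow> \<phi> t" by (rule LIM_zero_cancel)
    then show ?thesis by (simp add: sc)
  qed
  define L where "L k = exp (-(s k)\<^sup>2/2)" for k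
  have Lpos: "0 < L k" for k by (simp add: L_def)
  have L1: "L k \<le> 1" for k by (simp add: L_def)
  have Lc: "(\<lambda>k. complex_of_real (L k)) \<longlonglongrightarrow> \<phi> 1" using conv[of 1] by (simp add: L_def)
  define l where "l = Re (\<phi> 1)"
  have Lr: "L \<longlonglongrightarrow> l" using tendsto_Re[OF Lc] by (simp add: l_def)
  have l0: "0 \<le> l" by (rule LIMSEQ_le_const[OF Lr]) (use Lpos less_imp_le in blast)
  have l1: "l \<le> 1" by (rule LIMSEQ_le_const2[OF Lr]) (use L1 in blast)
  have powr_eq: "exp (-(s k * t)\<^sup>2/2) = L k powr (t\<^sup>2)" for k t
    using Lpos[of k] by (simp add: powr_def L_def power_mult_distrib)
  have lpos: "l > 0"
  proof (rule ccontr)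
    assume "\<not> l > 0"
    then have l00: "l = 0" using l0 by simp
    have z: "\<phi> t = 0" if "t \<noteq> 0" for t
    proof -
      have "(\<lambda>k. L k powr (t\<^sup>2)) \<longlonglongrightarrow> 0"
      proof (rule tendsto_zero_powrI[OF Lr[unfolded l00] tendsto_const])
        show "\<forall>\<^sub>F k in sequentially. 0 \<le> L k" by (rule always_eventually) (simp add: less_imp_le[OF Lpos])
        show "0 < t\<^sup>2" using that by simp
      qed
      then have "(\<lambda>k. complex_of_real (L k powr (t\<^sup>2))) \<longlonglongrightarrow> complex_of_real 0" by (rule tendsto_of_real)
      moreover have "(\<lambda>k. complex_of_real (L k powr (t\<^sup>2))) \<longlonglongrightarrow> \<phi> t" using conv[of t] by (simp only: powr_eq)
      ultimately have "\<phi> t = complex_of_real 0" by (rule LIMSEQ_unique[rotated])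
      then show ?thesis by simp
    qed
    have "isCont \<phi> 0" unfolding \<phi>_def by (rule real_distribution.isCont_char[OF RD])
    then have "(\<lambda>m. \<phi> (inverse (real (Suc m)))) \<longlonglongrightarrow> \<phi> 0"
      by (rule isCont_tendsto_compose[OF _ LIMSEQ_inverse_real_of_nat])
    moreover have "(\<lambda>m. \<phi> (inverse (real (Suc m)))) = (\<lambda>m. 0)" by (intro ext z) simp
    ultimately have "(\<lambda>m. 0) \<longlonglongrightarrow> \<phi> 0" by simp
    then have "\<phi> 0 = 0" by (rule LIMSEQ_unique[OF tendsto_const, symmetric])
    moreover have "\<phi> 0 = 1" unfolding \<phi>_def by (rule real_distribution.char_zero[OF RD])
    ultimately show False by simp
  qed
  have lform: "\<phi> t = complex_of_real (l powr (t\<^sup>2))" for t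
  proof -
    have "(\<lambda>k. L k powr (t\<^sup>2)) \<longlonglongrightarrow> l powr (t\<^sup>2)"
      by (rule tendsto_powr[OF Lr tendsto_const]) (use lpos in simp)
    then have "(\<lambda>k. complex_of_real (L k powr (t\<^sup>2))) \<longlonglongrightarrow> complex_of_real (l powr (t\<^sup>2))" by (rule tendsto_of_real)
    moreover have "(\<lambda>k. complex_of_real (L k powr (t\<^sup>2))) \<longlonglongrightarrow> \<phi> t" using conv[of t] by (simp only: powr_eq)
    ultimately show ?thesis by (rule LIMSEQ_unique[rotated])
  qed
  define \<sigma> where "\<sigma> = sqrt (-2 * ln l)"
  have lnl: "ln l \<le> 0" using lpos l1 by simp
  have nn: "0 \<le> -2 * ln l" using lnl by simp
  have \<sigma>0: "\<sigma> \<ge> 0" unfolding \<sigma>_def by (rule real_sqrt_ge_zero[OF nn])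
  have s2: "\<sigma>\<^sup>2 = -2 * ln l" unfolding \<sigma>_def by (rule real_sqrt_pow2[OF nn])
  have \<phi>form: "\<phi> t = complex_of_real (exp (-(\<sigma> * t)\<^sup>2/2))" for t
  proof -
    have "(\<sigma> * t)\<^sup>2 = \<sigma>\<^sup>2 * t\<^sup>2" by (rule power_mult_distrib)
    then have e: "-(\<sigma> * t)\<^sup>2/2 = t\<^sup>2 * ln l" unfolding s2 by simp
    have "l powr (t\<^sup>2) = exp (t\<^sup>2 * ln l)" using lpos by (simp add: powr_def)
    then show ?thesis unfolding lform[of t] e by simp
  qed
  show ?thesis
  proof (cases "\<sigma> > 0")
    case True
    define D where "D = density lborel (\<lambda>x. ennreal (normal_density 0 \<sigma> x))"
    have PD: "prob_space D" unfolding D_def by (rule prob_space_normal_density[OF True])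
    have sD: "sets D = sets borel" by (simp add: D_def)
    have dD: "distributed D lborel (\<lambda>x. x) (normal_density 0 \<sigma>)"
      unfolding distributed_def
    proof (intro conjI)
      show "distr D lborel (\<lambda>x. x) = density lborel (\<lambda>x. ennreal (normal_density 0 \<sigma> x))"
        using distr_id2[of lborel D] sD by (simp add: D_def)
      show "(\<lambda>x. x) \<in> D \<rightarrow>\<^sub>M lborel" by (rule measurable_ident_sets) (simp add: sD)
    qed simp
    have cD: "char D t = complex_of_real (exp (-(\<sigma> * t)\<^sup>2/2))" for t
    proof -
      have "char (distr D borel (\<lambda>x. x)) t = complex_of_real (exp (-(\<sigma> * t)\<^sup>2/2))"
        by (rule prob_space.char_normal0[OF PD dD True])
      moreover have "distr D borel (\<lambda>x. x) = D" using distr_id2[of borel D] sD by simp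
      ultimately show ?thesis by simp
    qed
    have RDD: "real_distribution D" using PD sD
      by (simp add: real_distribution_def real_distribution_axioms_def)
    have "distr M borel Z = D"
      by (rule Levy_uniqueness[OF RD RDD]) (auto simp: \<phi>_def[symmetric] \<phi>form cD)
    then have d: "distributed M lborel Z (normal_density 0 \<sigma>)"
      unfolding distributed_def using Zm by (simp add: D_def distr_borel_lborel)
    have "\<exists>\<mu> \<sigma>'. 0 < \<sigma>' \<and> distributed M lborel Z (normal_density \<mu> \<sigma>')"
      by (intro exI[of _ 0] exI[of _ \<sigma>] conjI True d)
    then show ?thesis unfolding gaussian_rv_def using Zm by (intro conjI disjI1)
  next
    case False
    then have \<sigma>00: "\<sigma> = 0" using \<sigma>0 by simp
    define R where "R = return borel (0::real)"
    have PR: "prob_space R" unfolding R_def by (rule prob_space_return) simp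
    have RR: "real_distribution R" using PR
      by (simp add: real_distribution_def real_distribution_axioms_def R_def)
    have cR: "char R t = 1" for t
      unfolding char_def R_def by (subst integral_return) auto
    have "distr M borel Z = R"
      by (rule Levy_uniqueness[OF RD RR]) (auto simp: \<phi>_def[symmetric] \<phi>form cR \<sigma>00)
    then have e: "distr M borel Z = return borel 0" unfolding R_def .
    have "AE x in return borel (0::real). x = 0" by (subst AE_return) auto
    then have "AE x in distr M borel Z. x = 0" by (simp only: e)
    then have ae: "AE \<omega> in M. Z \<omega> = 0" by (rule AE_distrD[OF Zm])
    have "\<exists>c. AE \<omega> in M. Z \<omega> = c" by (intro exI[of _ 0] ae)
    then show ?thesis unfolding gaussian_rv_def using Zm by (intro conjI disjI2)
  qed
qed

end

lemma sum_if_restrict: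
  assumes "finite T" "S \<subseteq> T"
  shows "(\<Sum>w\<in>T. if w \<in> S then f w else 0) = (\<Sum>w\<in>S. f w)"
  by (rule sum.mono_neutral_cong_right) (use assms in auto)

lemma lc_union:
  assumes "finite W1" "finite W2"
  shows "lc eta (W1 \<union> W2) (\<lambda>w. (if w \<in> W1 then c1 w else 0) + (if w \<in> W2 then c2 w else 0)) \<omega>
     = lc eta W1 c1 \<omega> + lc eta W2 c2 \<omega>"
proof -
  have "lc eta (W1 \<union> W2) (\<lambda>w. (if w \<in> W1 then c1 w else 0) + (if w \<in> W2 then c2 w else 0)) \<omega>
    = (\<Sum>w\<in>W1 \<union> W2. (if w \<in> W1 then c1 w * eta w \<omega> else 0)) + (\<Sum>w\<in>W1 \<union> W2. (if w \<in> W2 then c2 w * eta w \<omega> else 0))"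
    unfolding lc_def sum.distrib[symmetric] by (intro sum.cong refl) (simp add: distrib_right)
  also have "\<dots> = lc eta W1 c1 \<omega> + lc eta W2 c2 \<omega>"
    unfolding lc_def using assms by (simp add: sum_if_restrict)
  finally show ?thesis .
qed

context prob_space
begin

lemma GL_meas: "GL M N eta Z \<Longrightarrow> Z \<in> borel_measurable M"
  by (simp add: GL_def)

lemma GL_add:
  assumes gwn: "gaussian_white_noise M N eta" and Z1: "GL M N eta Z1" and Z2: "GL M N eta Z2"
  shows "GL M N eta (\<lambda>\<omega>. Z1 \<omega> + Z2 \<omega>)"
  unfolding GL_def
proof (intro conjI allI impI)
  show "(\<lambda>\<omega>. Z1 \<omega> + Z2 \<omega>) \<in> borel_measurable M" using GL_meas[OF Z1] GL_meas[OF Z2] by simp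
  fix e :: real assume e: "e > 0"
  then have e2: "e/2 > 0" by simp
  obtain W1 c1 where W1: "finite W1" "\<forall>w\<in>W1. fst w < N" "integrable M (\<lambda>\<omega>. \<bar>Z1 \<omega> - lc eta W1 c1 \<omega>\<bar>)"
    "(\<integral>\<omega>. \<bar>Z1 \<omega> - lc eta W1 c1 \<omega>\<bar> \<partial>M) < e/2"
    using Z1 e2 unfolding GL_def by blast
  obtain W2 c2 where W2: "finite W2" "\<forall>w\<in>W2. fst w < N" "integrable M (\<lambda>\<omega>. \<bar>Z2 \<omega> - lc eta W2 c2 \<omega>\<bar>)"
    "(\<integral>\<omega>. \<bar>Z2 \<omega> - lc eta W2 c2 \<omega>\<bar> \<partial>M) < e/2"
    using Z2 e2 unfolding GL_def by blast
  define c where "c = (\<lambda>w. (if w \<in> W1 then c1 w else 0) + (if w \<in> W2 then c2 w else 0))"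
  have lceq: "lc eta (W1 \<union> W2) c \<omega> = lc eta W1 c1 \<omega> + lc eta W2 c2 \<omega>" for \<omega>
    unfolding c_def by (rule lc_union[OF W1(1) W2(1)])
  have bnd: "\<bar>Z1 \<omega> + Z2 \<omega> - lc eta (W1 \<union> W2) c \<omega>\<bar> \<le> \<bar>Z1 \<omega> - lc eta W1 c1 \<omega>\<bar> + \<bar>Z2 \<omega> - lc eta W2 c2 \<omega>\<bar>" for \<omega>
    unfolding lceq by simp
  have meas: "(\<lambda>\<omega>. \<bar>Z1 \<omega> + Z2 \<omega> - lc eta (W1 \<union> W2) c \<omega>\<bar>) \<in> borel_measurable M"
  proof -
    have Wun: "\<forall>w\<in>W1 \<union> W2. fst w < N" using W1(2) W2(2) by blast
    show ?thesis
      by (intro borel_measurable_abs borel_measurable_diff borel_measurable_add GL_meas[OF Z1] GL_meas[OF Z2] lc_meas[OF gwn Wun])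
  qed
  have int2: "integrable M (\<lambda>\<omega>. \<bar>Z1 \<omega> - lc eta W1 c1 \<omega>\<bar> + \<bar>Z2 \<omega> - lc eta W2 c2 \<omega>\<bar>)"
    using W1(3) W2(3) by simp
  have int: "integrable M (\<lambda>\<omega>. \<bar>Z1 \<omega> + Z2 \<omega> - lc eta (W1 \<union> W2) c \<omega>\<bar>)"
    by (rule Bochner_Integration.integrable_bound[OF int2 meas]) (use bnd in \<open>auto intro!: AE_I2 order.trans[OF _ abs_ge_self]\<close>)
  have "(\<integral>\<omega>. \<bar>Z1 \<omega> + Z2 \<omega> - lc eta (W1 \<union> W2) c \<omega>\<bar> \<partial>M) \<le> (\<integral>\<omega>. \<bar>Z1 \<omega> - lc eta W1 c1 \<omega>\<bar> + \<bar>Z2 \<omega> - lc eta W2 c2 \<omega>\<bar> \<partial>M)"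
    by (rule integral_mono[OF int int2 bnd])
  also have "\<dots> = (\<integral>\<omega>. \<bar>Z1 \<omega> - lc eta W1 c1 \<omega>\<bar> \<partial>M) + (\<integral>\<omega>. \<bar>Z2 \<omega> - lc eta W2 c2 \<omega>\<bar> \<partial>M)"
    by (rule Bochner_Integration.integral_add[OF W1(3) W2(3)])
  also have "\<dots> < e" using W1(4) W2(4) by simp
  finally have "(\<integral>\<omega>. \<bar>Z1 \<omega> + Z2 \<omega> - lc eta (W1 \<union> W2) c \<omega>\<bar> \<partial>M) < e" .
  moreover have "finite (W1 \<union> W2)" "\<forall>w\<in>W1 \<union> W2. fst w < N" using W1 W2 by auto
  ultimately show "\<exists>W c. finite W \<and> (\<forall>w\<in>W. fst w < N) \<and>
      integrable M (\<lambda>\<omega>. \<bar>Z1 \<omega> + Z2 \<omega> - lc eta W c \<omega>\<bar>) \<and> (\<integral>\<omega>. \<bar>Z1 \<omega> + Z2 \<omega> - lc eta W c \<omega>\<bar> \<partial>M) < e"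
    using int by blast
qed

lemma GL_cmult:
  assumes gwn: "gaussian_white_noise M N eta" and Z: "GL M N eta Z"
  shows "GL M N eta (\<lambda>\<omega>. a * Z \<omega>)"
  unfolding GL_def
proof (intro conjI allI impI)
  show "(\<lambda>\<omega>. a * Z \<omega>) \<in> borel_measurable M" using GL_meas[OF Z] by simp
  fix e :: real assume e: "e > 0"
  then have e2: "e / (\<bar>a\<bar> + 1) > 0" by simp
  obtain W c where W: "finite W" "\<forall>w\<in>W. fst w < N" "integrable M (\<lambda>\<omega>. \<bar>Z \<omega> - lc eta W c \<omega>\<bar>)"
    "(\<integral>\<omega>. \<bar>Z \<omega> - lc eta W c \<omega>\<bar> \<partial>M) < e / (\<bar>a\<bar> + 1)"
    using Z e2 unfolding GL_def by blast
  have lceq: "lc eta W (\<lambda>w. a * c w) \<omega> = a * lc eta W c \<omega>" for \<omega>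
    unfolding lc_def by (simp add: sum_distrib_left mult.assoc)
  have eq: "(\<lambda>\<omega>. \<bar>a * Z \<omega> - lc eta W (\<lambda>w. a * c w) \<omega>\<bar>) = (\<lambda>\<omega>. \<bar>a\<bar> * \<bar>Z \<omega> - lc eta W c \<omega>\<bar>)"
    by (intro ext) (simp add: lceq abs_mult[symmetric] right_diff_distrib)
  have int: "integrable M (\<lambda>\<omega>. \<bar>a * Z \<omega> - lc eta W (\<lambda>w. a * c w) \<omega>\<bar>)"
    unfolding eq using W(3) by simp
  have "(\<integral>\<omega>. \<bar>a * Z \<omega> - lc eta W (\<lambda>w. a * c w) \<omega>\<bar> \<partial>M) = \<bar>a\<bar> * (\<integral>\<omega>. \<bar>Z \<omega> - lc eta W c \<omega>\<bar> \<partial>M)"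
    unfolding eq by simp
  also have "\<dots> \<le> \<bar>a\<bar> * (e / (\<bar>a\<bar> + 1))" using W(4) by (intro mult_left_mono) auto
  also have "\<dots> < e"
  proof -
    have "\<bar>a\<bar> * (e / (\<bar>a\<bar> + 1)) = e * (\<bar>a\<bar> / (\<bar>a\<bar> + 1))" by simp
    also have "\<dots> < e * 1" using e by (intro mult_strict_left_mono) auto
    finally show ?thesis by simp
  qed
  finally show "\<exists>W c. finite W \<and> (\<forall>w\<in>W. fst w < N) \<and>
      integrable M (\<lambda>\<omega>. \<bar>a * Z \<omega> - lc eta W c \<omega>\<bar>) \<and> (\<integral>\<omega>. \<bar>a * Z \<omega> - lc eta W c \<omega>\<bar> \<partial>M) < e"
    using int W(1,2) by blast
qed

lemma GL_zero: "GL M N eta (\<lambda>\<omega>. 0)"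
  unfolding GL_def
proof (intro conjI allI impI)
  fix e :: real assume "e > 0"
  then show "\<exists>W c. finite W \<and> (\<forall>w\<in>W. fst w < N) \<and>
      integrable M (\<lambda>\<omega>. \<bar>0 - lc eta W c \<omega>\<bar>) \<and> (\<integral>\<omega>. \<bar>0 - lc eta W c \<omega>\<bar> \<partial>M) < e"
    by (intro exI[of _ "{}"]) (simp add: lc_def)
qed simp

lemma GL_sum:
  assumes gwn: "gaussian_white_noise M N eta" and fin: "finite I" and Z: "\<And>i. i \<in> I \<Longrightarrow> GL M N eta (Z i)"
  shows "GL M N eta (\<lambda>\<omega>. \<Sum>i\<in>I. Z i \<omega>)"
  using fin Z
proof (induct I rule: finite_induct)
  case empty then show ?case using GL_zero by simp
next
  case (insert i I)
  have "GL M N eta (\<lambda>\<omega>. Z i \<omega> + (\<Sum>i\<in>I. Z i \<omega>))"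
    by (rule GL_add[OF gwn]) (use insert in auto)
  then show ?case using insert by simp
qed

lemma GL_cong_AE:
  assumes Z: "GL M N eta Z" and m: "Z' \<in> borel_measurable M" and ae: "AE \<omega> in M. Z \<omega> = Z' \<omega>"
    and gwn: "gaussian_white_noise M N eta"
  shows "GL M N eta Z'"
  unfolding GL_def
proof (intro conjI allI impI)
  show "Z' \<in> borel_measurable M" by (rule m)
  fix e :: real assume e: "e > 0"
  obtain W c where W: "finite W" "\<forall>w\<in>W. fst w < N" "integrable M (\<lambda>\<omega>. \<bar>Z \<omega> - lc eta W c \<omega>\<bar>)"
    "(\<integral>\<omega>. \<bar>Z \<omega> - lc eta W c \<omega>\<bar> \<partial>M) < e"
    using Z e unfolding GL_def by blast
  have ae2: "AE \<omega> in M. \<bar>Z \<omega> - lc eta W c \<omega>\<bar> = \<bar>Z' \<omega> - lc eta W c \<omega>\<bar>" using ae by auto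
  have m2: "(\<lambda>\<omega>. \<bar>Z' \<omega> - lc eta W c \<omega>\<bar>) \<in> borel_measurable M"
    by (intro borel_measurable_abs borel_measurable_diff m lc_meas[OF gwn W(2)])
  have int: "integrable M (\<lambda>\<omega>. \<bar>Z' \<omega> - lc eta W c \<omega>\<bar>)"
    by (rule integrable_cong_AE_imp[OF W(3) m2 ae2])
  have "(\<integral>\<omega>. \<bar>Z' \<omega> - lc eta W c \<omega>\<bar> \<partial>M) = (\<integral>\<omega>. \<bar>Z \<omega> - lc eta W c \<omega>\<bar> \<partial>M)"
    by (rule integral_cong_AE) (use m2 W(3) ae2 in auto)
  then show "\<exists>W c. finite W \<and> (\<forall>w\<in>W. fst w < N) \<and>
      integrable M (\<lambda>\<omega>. \<bar>Z' \<omega> - lc eta W c \<omega>\<bar>) \<and> (\<integral>\<omega>. \<bar>Z' \<omega> - lc eta W c \<omega>\<bar> \<partial>M) < e"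
    using W int by (intro exI[of _ W] exI[of _ c]) simp
qed

end

lemma cp_nonempty: "causal_path N p Phi q \<Longrightarrow> q \<noteq> []"
  by (cases q) auto

lemma cp_props:
  "causal_path N p Phi q \<Longrightarrow> (\<forall>v\<in>set q. fst v < N \<and> snd (hd q) \<le> snd v \<and> snd v \<le> snd (last q))
     \<and> int (length q) \<le> snd (last q) - snd (hd q) + 1"
proof (induct N p Phi q rule: causal_path.induct)
  case (1 N p Phi) then show ?case by simp
next
  case (2 N p Phi v) then show ?case by (simp add: node_ok_def)
next
  case (3 N p Phi u v rest)
  then have e: "ts_edge N p Phi u v" and IH: "(\<forall>w\<in>set (v # rest). fst w < N \<and> snd v \<le> snd w \<and> snd w \<le> snd (last (v # rest)))
     \<and> int (length (v # rest)) \<le> snd (last (v # rest)) - snd v + 1" by auto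
  have uv: "snd u + 1 \<le> snd v" "fst u < N" using e by (auto simp: ts_edge_def)
  have lv: "snd v \<le> snd (last (v # rest))" using IH by simp
  show ?case using IH uv lv by auto
qed

lemma finite_pp: "finite (proper_paths N p Phi Xs x Y)"
proof -
  define A where "A = {..<N} \<times> {snd x..snd Y}"
  have "proper_paths N p Phi Xs x Y \<subseteq> {xs. set xs \<subseteq> A \<and> length xs \<le> nat (snd Y - snd x + 1)}"
  proof
    fix q assume "q \<in> proper_paths N p Phi Xs x Y"
    then have q: "causal_path N p Phi q" "hd q = x" "last q = Y" by (auto simp: proper_paths_def)
    from cp_props[OF q(1)] q(2,3) show "q \<in> {xs. set xs \<subseteq> A \<and> length xs \<le> nat (snd Y - snd x + 1)}"
      by (auto simp: A_def mem_Times_iff)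
  qed
  moreover have "finite {xs. set xs \<subseteq> A \<and> length xs \<le> nat (snd Y - snd x + 1)}"
    by (rule finite_lists_length_le) (simp add: A_def)
  ultimately show ?thesis by (rule finite_subset)
qed

lemma pp_empty_time:
  assumes "Y \<noteq> x" "snd Y \<le> snd x"
  shows "proper_paths N p Phi Xs x Y = {}"
proof (rule ccontr)
  assume "proper_paths N p Phi Xs x Y \<noteq> {}"
  then obtain q where q: "causal_path N p Phi q" "hd q = x" "last q = Y" by (auto simp: proper_paths_def)
  have "int (length q) \<le> 1" using cp_props[OF q(1)] q(2,3) assms by auto
  moreover have "q \<noteq> []" by (rule cp_nonempty[OF q(1)])
  ultimately obtain v where "q = [v]" by (cases q) auto
  then show False using q assms by simp
qed

lemma pp_empty_N:
  assumes "\<not> fst Y < N"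
  shows "proper_paths N p Phi Xs x Y = {}"
proof (rule ccontr)
  assume "proper_paths N p Phi Xs x Y \<noteq> {}"
  then obtain q where q: "causal_path N p Phi q" "last q = Y" by (auto simp: proper_paths_def)
  have "last q \<in> set q" using cp_nonempty[OF q(1)] by simp
  then show False using cp_props[OF q(1)] q(2) assms by auto
qed

lemma theta_zero_time: "Y \<noteq> x \<Longrightarrow> snd Y \<le> snd x \<Longrightarrow> theta N p Phi Xs x Y = 0"
  by (simp add: theta_def pp_empty_time)

lemma theta_zero_N: "\<not> fst Y < N \<Longrightarrow> theta N p Phi Xs x Y = 0"
  by (simp add: theta_def pp_empty_N)

lemma cp_snoc: "q \<noteq> [] \<Longrightarrow> causal_path N p Phi (q @ [y]) \<longleftrightarrow> causal_path N p Phi q \<and> ts_edge N p Phi (last q) y"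
proof (induct q)
  case Nil then show ?case by simp
next
  case (Cons a q)
  show ?case
  proof (cases q)
    case Nil then show ?thesis by (auto simp: ts_edge_def node_ok_def)
  next
    case (Cons b q')
    then show ?thesis using Cons.hyps by simp
  qed
qed

lemma pw_snoc: "q \<noteq> [] \<Longrightarrow> path_weight Phi (q @ [y]) = path_weight Phi q * Phi (nat (snd y - snd (last q))) (fst y) (fst (last q))"
proof (induct q)
  case Nil then show ?case by simp
next
  case (Cons a q)
  show ?case
  proof (cases q)
    case Nil then show ?thesis by simp
  next
    case (Cons b q')
    then show ?thesis using Cons.hyps by simp
  qed
qed

definition hfun :: "nat \<Rightarrow> nat \<Rightarrow> (nat \<Rightarrow> nat \<Rightarrow> nat \<Rightarrow> real) \<Rightarrow> node set \<Rightarrow> node \<Rightarrow> node \<Rightarrow> real" where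
  "hfun N p Phi Xs x u = (if u \<in> Xs then (if u = x then 1 else 0) else theta N p Phi Xs x u)"

lemma theta_rec:
  assumes Y: "fst Y < N" "Y \<notin> Xs" and x: "x \<in> Xs" "fst x < N"
  shows "theta N p Phi Xs x Y = var_rhs N p Phi (hfun N p Phi Xs x) Y"
proof -
  define PP' where "PP' = {q. causal_path N p Phi q \<and> hd q = x \<and> (\<forall>z\<in>set (tl q). z \<notin> Xs) \<and> ts_edge N p Phi (last q) Y}"
  define F where "F u = Phi (nat (snd Y - snd u)) (fst Y) (fst u)" for u
  have xY: "x \<noteq> Y" using x Y by auto
  have img: "proper_paths N p Phi Xs x Y = (\<lambda>q. q @ [Y]) ` PP'"
  proof (intro equalityI subsetI)
    fix q assume "q \<in> proper_paths N p Phi Xs x Y"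
    then have q: "causal_path N p Phi q" "hd q = x" "last q = Y" "\<forall>z\<in>set (tl q). z \<notin> Xs"
      by (auto simp: proper_paths_def)
    have qne: "q \<noteq> []" by (rule cp_nonempty[OF q(1)])
    define q' where "q' = butlast q"
    have qq: "q = q' @ [Y]" using append_butlast_last_id[OF qne] q(3) by (simp add: q'_def)
    have q'ne: "q' \<noteq> []" using qq q(2) xY by (cases q') auto
    have "causal_path N p Phi q' \<and> ts_edge N p Phi (last q') Y" using q(1) cp_snoc[OF q'ne] qq by simp
    moreover have "hd q' = x" using q(2) qq q'ne by simp
    moreover have "\<forall>z\<in>set (tl q'). z \<notin> Xs" using q(4) qq q'ne by (cases q') auto
    ultimately have "q' \<in> PP'" by (simp add: PP'_def)
    then show "q \<in> (\<lambda>q. q @ [Y]) ` PP'" using qq by blast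
  next
    fix q assume "q \<in> (\<lambda>q. q @ [Y]) ` PP'"
    then obtain q' where q': "q' \<in> PP'" "q = q' @ [Y]" by blast
    have c: "causal_path N p Phi q'" using q' by (simp add: PP'_def)
    have q'ne: "q' \<noteq> []" by (rule cp_nonempty[OF c])
    have "causal_path N p Phi q" using q' cp_snoc[OF q'ne] by (simp add: PP'_def)
    moreover have "hd q = x" using q' q'ne by (simp add: PP'_def)
    moreover have "last q = Y" using q' by simp
    moreover have "\<forall>z\<in>set (tl q). z \<notin> Xs" using q' q'ne Y(2) by (cases q') (auto simp: PP'_def)
    ultimately show "q \<in> proper_paths N p Phi Xs x Y" by (simp add: proper_paths_def)
  qed
  have inj: "inj_on (\<lambda>q. q @ [Y]) PP'" by (rule inj_onI) simp
  have finPP: "finite PP'" using finite_pp[of N p Phi Xs x Y] img inj finite_imageD by metis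
  have "theta N p Phi Xs x Y = (\<Sum>q\<in>PP'. path_weight Phi (q @ [Y]))"
    unfolding theta_def img by (simp add: sum.reindex[OF inj])
  also have "\<dots> = (\<Sum>q\<in>PP'. path_weight Phi q * F (last q))"
  proof (intro sum.cong refl)
    fix q assume "q \<in> PP'"
    then have "q \<noteq> []" using cp_nonempty by (auto simp: PP'_def)
    then show "path_weight Phi (q @ [Y]) = path_weight Phi q * F (last q)" by (simp add: pw_snoc F_def)
  qed
  also have "\<dots> = (\<Sum>u\<in>{u. ts_edge N p Phi u Y}. \<Sum>q\<in>{q\<in>PP'. last q = u}. path_weight Phi q * F (last q))"
  proof (rule sum.group[symmetric, OF finPP])
    have "{u. ts_edge N p Phi u Y} \<subseteq> {..<N} \<times> {snd Y - int p..snd Y}"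
      by (auto simp: ts_edge_def mem_Times_iff)
    then show "finite {u. ts_edge N p Phi u Y}" by (rule finite_subset) simp
    show "last ` PP' \<subseteq> {u. ts_edge N p Phi u Y}" by (auto simp: PP'_def)
  qed
  also have "\<dots> = (\<Sum>u\<in>{u. ts_edge N p Phi u Y}. F u * hfun N p Phi Xs x u)"
  proof (intro sum.cong refl)
    fix u assume u: "u \<in> {u. ts_edge N p Phi u Y}"
    have "(\<Sum>q\<in>{q\<in>PP'. last q = u}. path_weight Phi q * F (last q)) = F u * (\<Sum>q\<in>{q\<in>PP'. last q = u}. path_weight Phi q)"
      by (simp add: sum_distrib_left mult.commute)
    also have "(\<Sum>q\<in>{q\<in>PP'. last q = u}. path_weight Phi q) = hfun N p Phi Xs x u"
    proof (cases "u \<in> Xs")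
      case False
      have "{q\<in>PP'. last q = u} = proper_paths N p Phi Xs x u"
        using u by (auto simp: PP'_def proper_paths_def)
      then show ?thesis using False by (simp add: hfun_def theta_def)
    next
      case True
      have "{q\<in>PP'. last q = u} = (if u = x then {[x]} else {})"
      proof (intro equalityI subsetI)
        fix q assume q: "q \<in> {q\<in>PP'. last q = u}"
        then have c: "causal_path N p Phi q" and hq: "hd q = x" and lq: "last q = u"
          and tq: "\<forall>z\<in>set (tl q). z \<notin> Xs" by (auto simp: PP'_def)
        have "tl q = []"
        proof (rule ccontr)
          assume "tl q \<noteq> []"
          then have "last q \<in> set (tl q)" using cp_nonempty[OF c]
            by (metis last_in_set last_tl)
          then show False using tq lq True by auto
        qed
        then have "q = [x]" using cp_nonempty[OF c] hq by (cases q) auto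
        then show "q \<in> (if u = x then {[x]} else {})" using lq by auto
      next
        fix q assume q: "q \<in> (if u = x then {[x]} else {})"
        then have qx: "q = [x]" "u = x" by (auto split: if_splits)
        have "ts_edge N p Phi x Y" using u qx by simp
        then show "q \<in> {q\<in>PP'. last q = u}" using qx x by (simp add: PP'_def node_ok_def)
      qed
      then show ?thesis using True by (simp add: hfun_def)
    qed
    finally show "(\<Sum>q\<in>{q\<in>PP'. last q = u}. path_weight Phi q * F (last q)) = F u * hfun N p Phi Xs x u" .
  qed
  also have "\<dots> = var_rhs N p Phi (hfun N p Phi Xs x) Y"
  proof -
    define g where "g = (\<lambda>(k::nat, j::nat). (j, snd Y - int k))"
    define S where "S = {1..p} \<times> {..<N}"
    have injg: "inj_on g S" by (rule inj_onI) (auto simp: g_def S_def)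
    have "var_rhs N p Phi (hfun N p Phi Xs x) Y = (\<Sum>(k,j)\<in>S. Phi k (fst Y) j * hfun N p Phi Xs x (j, snd Y - int k))"
      unfolding var_rhs_def S_def by (rule sum.cartesian_product)
    also have "\<dots> = (\<Sum>kj\<in>S. F (g kj) * hfun N p Phi Xs x (g kj))"
      by (intro sum.cong refl) (auto simp: F_def g_def)
    also have "\<dots> = (\<Sum>u\<in>g ` S. F u * hfun N p Phi Xs x u)"
      by (simp add: sum.reindex[OF injg])
    also have "\<dots> = (\<Sum>u\<in>{u. ts_edge N p Phi u Y}. F u * hfun N p Phi Xs x u)"
    proof (rule sum.mono_neutral_right)
      show "finite (g ` S)" by (simp add: S_def)
      show "{u. ts_edge N p Phi u Y} \<subseteq> g ` S"
      proof
        fix u assume "u \<in> {u. ts_edge N p Phi u Y}"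
        then have e: "ts_edge N p Phi u Y" by simp
        then have "(nat (snd Y - snd u), fst u) \<in> S" by (auto simp: ts_edge_def S_def)
        moreover have "u = g (nat (snd Y - snd u), fst u)" using e by (auto simp: g_def ts_edge_def)
        ultimately show "u \<in> g ` S" by blast
      qed
      show "\<forall>u\<in>g ` S - {u. ts_edge N p Phi u Y}. F u * hfun N p Phi Xs x u = 0"
      proof
        fix u assume u: "u \<in> g ` S - {u. ts_edge N p Phi u Y}"
        then obtain k j where kj: "k \<in> {1..p}" "j < N" "u = (j, snd Y - int k)" by (auto simp: g_def S_def)
        have "\<not> ts_edge N p Phi u Y" using u by simp
        then have "Phi k (fst Y) j = 0" using kj Y(1) by (auto simp: ts_edge_def)
        then show "F u * hfun N p Phi Xs x u = 0" using kj by (simp add: F_def)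
      qed
    qed
    finally show ?thesis by simp
  qed
  finally show ?thesis .
qed

context prob_space
begin

lemma abs_le_1_sq: "\<bar>x::real\<bar> \<le> 1 + x\<^sup>2"
proof (cases "\<bar>x\<bar> \<le> 1")
  case True then show ?thesis by (simp add: add_increasing2)
next
  case False
  then have "\<bar>x\<bar> \<le> \<bar>x\<bar> * \<bar>x\<bar>" by (intro mult_le_cancel_left1[THEN iffD2]) auto
  also have "\<dots> = x\<^sup>2" by (simp add: power2_eq_square abs_mult_self_eq)
  finally show ?thesis by simp
qed

lemma sq_abs:
  fixes f :: "'a \<Rightarrow> real"
  assumes m: "f \<in> borel_measurable M" and i: "integrable M (\<lambda>\<omega>. (f \<omega>)\<^sup>2)"
  shows "integrable M (\<lambda>\<omega>. \<bar>f \<omega>\<bar>)" "(\<integral>\<omega>. \<bar>f \<omega>\<bar> \<partial>M) \<le> 1 + (\<integral>\<omega>. (f \<omega>)\<^sup>2 \<partial>M)"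
proof -
  have i2: "integrable M (\<lambda>\<omega>. 1 + (f \<omega>)\<^sup>2)" using i by simp
  show i3: "integrable M (\<lambda>\<omega>. \<bar>f \<omega>\<bar>)"
    by (rule Bochner_Integration.integrable_bound[OF i2]) (use m abs_le_1_sq in \<open>auto intro!: AE_I2\<close>)
  have "(\<integral>\<omega>. \<bar>f \<omega>\<bar> \<partial>M) \<le> (\<integral>\<omega>. 1 + (f \<omega>)\<^sup>2 \<partial>M)"
    by (rule integral_mono[OF i3 i2]) (rule abs_le_1_sq)
  also have "\<dots> = 1 + (\<integral>\<omega>. (f \<omega>)\<^sup>2 \<partial>M)"
    using i by (simp add: Bochner_Integration.integral_add prob_space)
  finally show "(\<integral>\<omega>. \<bar>f \<omega>\<bar> \<partial>M) \<le> 1 + (\<integral>\<omega>. (f \<omega>)\<^sup>2 \<partial>M)" .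
qed

lemma sq_sum:
  fixes f :: "'i \<Rightarrow> 'a \<Rightarrow> real"
  assumes fin: "finite I" and m: "\<And>i. i \<in> I \<Longrightarrow> f i \<in> borel_measurable M"
    and sq: "\<And>i. i \<in> I \<Longrightarrow> integrable M (\<lambda>\<omega>. (f i \<omega>)\<^sup>2)"
  shows "integrable M (\<lambda>\<omega>. (\<Sum>i\<in>I. f i \<omega>)\<^sup>2)"
    "(\<integral>\<omega>. (\<Sum>i\<in>I. f i \<omega>)\<^sup>2 \<partial>M) \<le> real (card I) * (\<Sum>i\<in>I. \<integral>\<omega>. (f i \<omega>)\<^sup>2 \<partial>M)"
proof -
  have i2: "integrable M (\<lambda>\<omega>. real (card I) * (\<Sum>i\<in>I. (f i \<omega>)\<^sup>2))" using sq by simp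
  have bnd: "(\<Sum>i\<in>I. f i \<omega>)\<^sup>2 \<le> real (card I) * (\<Sum>i\<in>I. (f i \<omega>)\<^sup>2)" for \<omega>
    using sum_squared_le_sum_of_squares[of "\<lambda>i. f i \<omega>" I] by (simp add: mult.commute)
  have mm: "(\<lambda>\<omega>. (\<Sum>i\<in>I. f i \<omega>)\<^sup>2) \<in> borel_measurable M" using m by simp
  show i3: "integrable M (\<lambda>\<omega>. (\<Sum>i\<in>I. f i \<omega>)\<^sup>2)"
    by (rule Bochner_Integration.integrable_bound[OF i2 mm]) (use bnd in \<open>auto intro!: AE_I2 order.trans[OF _ abs_ge_self]\<close>)
  have "(\<integral>\<omega>. (\<Sum>i\<in>I. f i \<omega>)\<^sup>2 \<partial>M) \<le> (\<integral>\<omega>. real (card I) * (\<Sum>i\<in>I. (f i \<omega>)\<^sup>2) \<partial>M)"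
    by (rule integral_mono[OF i3 i2 bnd])
  also have "\<dots> = real (card I) * (\<Sum>i\<in>I. \<integral>\<omega>. (f i \<omega>)\<^sup>2 \<partial>M)"
    using sq by (simp add: Bochner_Integration.integral_sum)
  finally show "(\<integral>\<omega>. (\<Sum>i\<in>I. f i \<omega>)\<^sup>2 \<partial>M) \<le> real (card I) * (\<Sum>i\<in>I. \<integral>\<omega>. (f i \<omega>)\<^sup>2 \<partial>M)" .
qed

lemma rep_L1:
  assumes st: "var_stable N p Phi" and p: "p \<ge> 1"
    and Dm: "\<And>v. fst v < N \<Longrightarrow> D v \<in> borel_measurable M"
    and Di: "\<And>v. fst v < N \<Longrightarrow> integrable M (\<lambda>\<omega>. \<bar>D v \<omega>\<bar>)"
    and DB: "\<And>v. fst v < N \<Longrightarrow> (\<integral>\<omega>. \<bar>D v \<omega>\<bar> \<partial>M) \<le> B"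
    and em: "\<And>v. fst v < N \<Longrightarrow> e v \<in> borel_measurable M"
    and ae: "AE \<omega> in M. \<forall>v. fst v < N \<longrightarrow> snd v \<le> T \<longrightarrow> D v \<omega> = var_rhs N p Phi (\<lambda>u. D u \<omega>) v + e v \<omega>"
    and i: "i < N" and t: "t \<le> T" and eps: "\<epsilon> > 0"
  shows "\<exists>k. integrable M (\<lambda>\<omega>. \<bar>D (i,t) \<omega> - (\<Sum>j<k. \<Sum>b<N. (compmat N p Phi ^\<^sub>m j) $$ (i,b) * e (b, t - int j) \<omega>)\<bar>) \<and>
             (\<integral>\<omega>. \<bar>D (i,t) \<omega> - (\<Sum>j<k. \<Sum>b<N. (compmat N p Phi ^\<^sub>m j) $$ (i,b) * e (b, t - int j) \<omega>)\<bar> \<partial>M) < \<epsilon>"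
proof -
  obtain c r where cr: "0 \<le> c" "0 < r" "r < 1"
    "\<And>k a b. a < N*p \<Longrightarrow> b < N*p \<Longrightarrow> \<bar>(compmat N p Phi ^\<^sub>m k) $$ (a,b)\<bar> \<le> c * r^k"
    using compmat_decay[OF st] by blast
  define n where "n = N*p"
  have N0: "N > 0" using i by simp
  have h1: "0 \<le> (\<integral>\<omega>. \<bar>D (i,t) \<omega>\<bar> \<partial>M)" by simp
  have h2: "(\<integral>\<omega>. \<bar>D (i,t) \<omega>\<bar> \<partial>M) \<le> B" using DB[of "(i,t)"] i by simp
  have B0: "B \<ge> 0" using h1 h2 by linarith
  define K where "K = real n * c * B + 1"
  have K0: "K > 0" unfolding K_def using cr B0 by (simp add: add_nonneg_pos)
  obtain k where k: "r ^ k < \<epsilon> / K" using real_arch_pow_inv[of "\<epsilon> / K" r] eps K0 cr by auto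
  define A' where "A' = compmat N p Phi ^\<^sub>m k"
  define NZ where "NZ \<omega> = (\<Sum>j<k. \<Sum>b<N. (compmat N p Phi ^\<^sub>m j) $$ (i,b) * e (b, t - int j) \<omega>)" for \<omega>
  define R where "R \<omega> = (\<Sum>b<n. A' $$ (i,b) * D (b mod N, t - int k - int (b div N)) \<omega>)" for \<omega>
  have fstb: "fst (b mod N, s) < N" for b s using N0 by simp
  have aeR: "AE \<omega> in M. D (i,t) \<omega> - NZ \<omega> = R \<omega>"
    using ae
  proof eventually_elim
    case (elim \<omega>)
    have "D (i,t) \<omega> = R \<omega> + NZ \<omega>"
      unfolding R_def NZ_def A'_def n_def
    proof (rule rep_entry[where f="\<lambda>u. D u \<omega>" and e="\<lambda>u. e u \<omega>", OF _ i p])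
      fix i' s assume "i' < N" "t - int k < s" "s \<le> t"
      then show "D (i', s) \<omega> = var_rhs N p Phi (\<lambda>u. D u \<omega>) (i', s) + e (i', s) \<omega>"
        using elim t by auto
    qed
    then show ?case by simp
  qed
  have Dint: "integrable M (D v)" if "fst v < N" for v
    using Di[OF that] integrable_abs_iff[OF Dm[OF that]] by simp
  have Rint: "integrable M R" unfolding R_def
    by (intro Bochner_Integration.integrable_sum) (simp add: Dint N0)
  have Rm: "R \<in> borel_measurable M" using Rint by (rule borel_measurable_integrable)
  have NZm: "NZ \<in> borel_measurable M" unfolding NZ_def
    by (intro borel_measurable_sum borel_measurable_times borel_measurable_const em) simp
  have absR: "\<bar>R \<omega>\<bar> \<le> (\<Sum>b<n. \<bar>A' $$ (i,b)\<bar> * \<bar>D (b mod N, t - int k - int (b div N)) \<omega>\<bar>)" for \<omega>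
    unfolding R_def by (rule order.trans[OF sum_abs]) (simp add: abs_mult)
  have int2: "integrable M (\<lambda>\<omega>. \<Sum>b<n. \<bar>A' $$ (i,b)\<bar> * \<bar>D (b mod N, t - int k - int (b div N)) \<omega>\<bar>)"
    by (intro Bochner_Integration.integrable_sum) (simp add: Di N0)
  have "(\<integral>\<omega>. \<bar>R \<omega>\<bar> \<partial>M) \<le> (\<integral>\<omega>. (\<Sum>b<n. \<bar>A' $$ (i,b)\<bar> * \<bar>D (b mod N, t - int k - int (b div N)) \<omega>\<bar>) \<partial>M)"
    by (rule integral_mono[OF _ int2 absR]) (use Rint in simp)
  also have "\<dots> = (\<Sum>b<n. \<bar>A' $$ (i,b)\<bar> * (\<integral>\<omega>. \<bar>D (b mod N, t - int k - int (b div N)) \<omega>\<bar> \<partial>M))"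
    by (subst Bochner_Integration.integral_sum) (simp_all add: Di N0)
  also have "\<dots> \<le> (\<Sum>b<n. (c * r^k) * B)"
  proof (rule sum_mono)
    fix b assume b: "b \<in> {..<n}"
    have iN: "i < N*p" using i p by (metis le_less_trans mult.right_neutral mult_le_mono2 nat_less_le)
    show "\<bar>A' $$ (i,b)\<bar> * (\<integral>\<omega>. \<bar>D (b mod N, t - int k - int (b div N)) \<omega>\<bar> \<partial>M) \<le> (c * r^k) * B"
      using cr(4)[OF iN, of b k] b DB[OF fstb] unfolding A'_def n_def
      by (intro mult_mono) auto
  qed
  also have "\<dots> = real n * c * B * r^k" by simp
  also have "\<dots> \<le> K * r^k" unfolding K_def using cr by (intro mult_right_mono) auto
  also have "\<dots> < K * (\<epsilon> / K)" using k K0 by (intro mult_strict_left_mono) auto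
  also have "\<dots> = \<epsilon>" using K0 by simp
  finally have Rlt: "(\<integral>\<omega>. \<bar>R \<omega>\<bar> \<partial>M) < \<epsilon>" .
  have aeA: "AE \<omega> in M. \<bar>R \<omega>\<bar> = \<bar>D (i,t) \<omega> - NZ \<omega>\<bar>" using aeR by auto
  have mA: "(\<lambda>\<omega>. \<bar>D (i,t) \<omega> - NZ \<omega>\<bar>) \<in> borel_measurable M"
    using Dm[of "(i,t)"] i NZm by simp
  have intA: "integrable M (\<lambda>\<omega>. \<bar>D (i,t) \<omega> - NZ \<omega>\<bar>)"
    by (rule integrable_cong_AE_imp[OF _ mA aeA]) (use Rint in simp)
  have "(\<integral>\<omega>. \<bar>D (i,t) \<omega> - NZ \<omega>\<bar> \<partial>M) = (\<integral>\<omega>. \<bar>R \<omega>\<bar> \<partial>M)"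
    by (rule integral_cong_AE) (use mA Rm aeA in auto)
  then show ?thesis using intA Rlt unfolding NZ_def by (intro exI[of _ k]) simp
qed

lemma decay_zero:
  assumes st: "var_stable N p Phi"
    and Dm: "\<And>v. fst v < N \<Longrightarrow> D v \<in> borel_measurable M"
    and Di: "\<And>v. fst v < N \<Longrightarrow> integrable M (\<lambda>\<omega>. \<bar>D v \<omega>\<bar>)"
    and DB: "\<And>v. fst v < N \<Longrightarrow> (\<integral>\<omega>. \<bar>D v \<omega>\<bar> \<partial>M) \<le> B"
    and ae: "AE \<omega> in M. \<forall>v. fst v < N \<longrightarrow> snd v \<le> T \<longrightarrow> D v \<omega> = var_rhs N p Phi (\<lambda>u. D u \<omega>) v"
    and i: "i < N" and t: "t \<le> T"
  shows "AE \<omega> in M. D (i,t) \<omega> = 0"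
proof (cases "p = 0")
  case True
  show ?thesis using ae
  proof eventually_elim
    case (elim \<omega>) then show ?case using i t True by (simp add: var_rhs_def)
  qed
next
  case False
  then have p: "p \<ge> 1" by simp
  have ae': "AE \<omega> in M. \<forall>v. fst v < N \<longrightarrow> snd v \<le> T \<longrightarrow> D v \<omega> = var_rhs N p Phi (\<lambda>u. D u \<omega>) v + (\<lambda>v \<omega>. 0) v \<omega>"
    using ae by simp
  have small: "(\<integral>\<omega>. \<bar>D (i,t) \<omega>\<bar> \<partial>M) < \<epsilon>" if "\<epsilon> > 0" for \<epsilon>
    using rep_L1[OF st p Dm Di DB _ ae' i t that] by simp
  have nn: "(\<integral>\<omega>. \<bar>D (i,t) \<omega>\<bar> \<partial>M) \<ge> 0" by simp
  have z: "(\<integral>\<omega>. \<bar>D (i,t) \<omega>\<bar> \<partial>M) = 0"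
  proof (rule ccontr)
    assume "(\<integral>\<omega>. \<bar>D (i,t) \<omega>\<bar> \<partial>M) \<noteq> 0"
    then have "(\<integral>\<omega>. \<bar>D (i,t) \<omega>\<bar> \<partial>M) > 0" using nn by linarith
    then show False using small[of "\<integral>\<omega>. \<bar>D (i,t) \<omega>\<bar> \<partial>M"] by simp
  qed
  have "AE \<omega> in M. \<bar>D (i,t) \<omega>\<bar> = 0"
    using integral_nonneg_eq_0_iff_AE[of M "\<lambda>\<omega>. \<bar>D (i,t) \<omega>\<bar>"] Di[of "(i,t)"] i z by simp
  then show ?thesis by simp
qed

end

lemma ae_var_all:
  fixes N :: nat and P :: "node \<Rightarrow> 'a \<Rightarrow> bool"
  assumes "\<forall>v. fst v < N \<longrightarrow> (AE \<omega> in M. P v \<omega>)"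
  shows "AE \<omega> in M. \<forall>v. fst v < N \<longrightarrow> P v \<omega>"
proof -
  have "\<forall>v. AE \<omega> in M. fst v < N \<longrightarrow> P v \<omega>"
  proof
    fix v :: node
    show "AE \<omega> in M. fst v < N \<longrightarrow> P v \<omega>"
    proof (cases "fst v < N")
      case True
      then have "AE \<omega> in M. P v \<omega>" using assms by blast
      then show ?thesis by (rule eventually_mono) simp
    qed simp
  qed
  then show ?thesis by (subst AE_all_countable)
qed

context prob_space
begin

lemma X_bound:
  assumes ws: "weakly_stationary M N X"
  shows "\<forall>v. fst v < N \<longrightarrow> (\<integral>\<omega>. (X v \<omega>)\<^sup>2 \<partial>M) \<le> (\<Sum>i<N. \<integral>\<omega>. (X (i,0) \<omega>)\<^sup>2 \<partial>M)"
proof (intro allI impI)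
  fix v :: node assume v: "fst v < N"
  obtain i t where it: "v = (i,t)" by (cases v)
  have i: "i < N" using v it by simp
  have "(\<integral>\<omega>. X (i, t + 0) \<omega> * X (i, t) \<omega> \<partial>M) = (\<integral>\<omega>. X (i, 0) \<omega> * X (i, 0) \<omega> \<partial>M)"
    using ws i unfolding weakly_stationary_def by blast
  then have e: "(\<integral>\<omega>. (X v \<omega>)\<^sup>2 \<partial>M) = (\<integral>\<omega>. (X (i,0) \<omega>)\<^sup>2 \<partial>M)" by (simp add: it power2_eq_square)
  have "(\<integral>\<omega>. (X (i,0) \<omega>)\<^sup>2 \<partial>M) \<le> (\<Sum>i<N. \<integral>\<omega>. (X (i,0) \<omega>)\<^sup>2 \<partial>M)"
    by (rule member_le_sum) (use i in auto)
  then show "(\<integral>\<omega>. (X v \<omega>)\<^sup>2 \<partial>M) \<le> (\<Sum>i<N. \<integral>\<omega>. (X (i,0) \<omega>)\<^sup>2 \<partial>M)" using e by simp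
qed

lemma GL_eta:
  assumes "fst v < N"
  shows "GL M N eta (eta v) \<or> \<not> eta v \<in> borel_measurable M"
proof (cases "eta v \<in> borel_measurable M")
  case True
  have "GL M N eta (eta v)"
    unfolding GL_def
  proof (intro conjI allI impI True)
    fix e :: real assume "e > 0"
    moreover have "lc eta {v} (\<lambda>_. 1) = eta v" by (simp add: lc_def)
    ultimately show "\<exists>W c. finite W \<and> (\<forall>w\<in>W. fst w < N) \<and>
      integrable M (\<lambda>\<omega>. \<bar>eta v \<omega> - lc eta W c \<omega>\<bar>) \<and> (\<integral>\<omega>. \<bar>eta v \<omega> - lc eta W c \<omega>\<bar> \<partial>M) < e"
      using assms by (intro exI[of _ "{v}"] exI[of _ "\<lambda>_. 1"]) simp
  qed
  then show ?thesis by simp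
qed simp

lemma GL_X:
  assumes var: "stationary_VAR M N p Phi X eta" and v: "fst v < N"
  shows "GL M N eta (X v)"
proof -
  have st: "var_stable N p Phi" and gwn: "gaussian_white_noise M N eta" and ws: "weakly_stationary M N X"
    and eqs: "\<forall>v. fst v < N \<longrightarrow> (AE \<omega> in M. X v \<omega> = var_rhs N p Phi (\<lambda>u. X u \<omega>) v + eta v \<omega>)"
    using var unfolding stationary_VAR_def by blast+
  have Xm: "X u \<in> borel_measurable M" if "fst u < N" for u using ws that unfolding weakly_stationary_def by blast
  have X2: "integrable M (\<lambda>\<omega>. (X u \<omega>)\<^sup>2)" if "fst u < N" for u using ws that unfolding weakly_stationary_def by blast
  have em: "eta u \<in> borel_measurable M" if "fst u < N" for u by (rule gwn_meas[OF gwn that])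
  have ae: "AE \<omega> in M. \<forall>v. fst v < N \<longrightarrow> X v \<omega> = var_rhs N p Phi (\<lambda>u. X u \<omega>) v + eta v \<omega>"
    by (rule ae_var_all[OF eqs])
  obtain i t where it: "v = (i,t)" by (cases v)
  have i: "i < N" using v it by simp
  show ?thesis
  proof (cases "p = 0")
    case True
    have "GL M N eta (eta v)" using GL_eta[OF v, of eta] em[OF v] by simp
    moreover have "AE \<omega> in M. eta v \<omega> = X v \<omega>" using ae
    proof eventually_elim
      case (elim \<omega>) then show ?case using v True by (cases v) (simp add: var_rhs_def)
    qed
    ultimately show ?thesis by (rule GL_cong_AE[OF _ Xm[OF v] _ gwn])
  next
    case False
    then have p: "p \<ge> 1" by simp
    define B where "B = 1 + (\<Sum>i<N. \<integral>\<omega>. (X (i,0) \<omega>)\<^sup>2 \<partial>M)"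
    have Xi: "integrable M (\<lambda>\<omega>. \<bar>X u \<omega>\<bar>)" if "fst u < N" for u using sq_abs(1)[OF Xm[OF that] X2[OF that]] .
    have XB: "(\<integral>\<omega>. \<bar>X u \<omega>\<bar> \<partial>M) \<le> B" if "fst u < N" for u :: node
      using sq_abs(2)[OF Xm[OF that] X2[OF that]] X_bound[OF ws] that unfolding B_def by fastforce
    have ae': "AE \<omega> in M. \<forall>v. fst v < N \<longrightarrow> snd v \<le> t \<longrightarrow> X v \<omega> = var_rhs N p Phi (\<lambda>u. X u \<omega>) v + eta v \<omega>"
      using ae by auto
    show ?thesis unfolding GL_def
    proof (intro conjI allI impI)
      show "X v \<in> borel_measurable M" by (rule Xm[OF v])
      fix e :: real assume e: "e > 0"
      obtain k where k: "integrable M (\<lambda>\<omega>. \<bar>X (i,t) \<omega> - (\<Sum>j<k. \<Sum>b<N. (compmat N p Phi ^\<^sub>m j) $$ (i,b) * eta (b, t - int j) \<omega>)\<bar>)"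
        "(\<integral>\<omega>. \<bar>X (i,t) \<omega> - (\<Sum>j<k. \<Sum>b<N. (compmat N p Phi ^\<^sub>m j) $$ (i,b) * eta (b, t - int j) \<omega>)\<bar> \<partial>M) < e"
        using rep_L1[OF st p Xm Xi XB em ae' i order.refl e] by blast
      define g where "g = (\<lambda>(j::nat, b::nat). (b, t - int j))"
      define S where "S = {..<k} \<times> {..<N}"
      define c where "c w = (compmat N p Phi ^\<^sub>m (nat (t - snd w))) $$ (i, fst w)" for w
      have injg: "inj_on g S" by (rule inj_onI) (auto simp: g_def S_def)
      have lceq: "(\<Sum>j<k. \<Sum>b<N. (compmat N p Phi ^\<^sub>m j) $$ (i,b) * eta (b, t - int j) \<omega>) = lc eta (g ` S) c \<omega>" for \<omega>
      proof -
        have "(\<Sum>j<k. \<Sum>b<N. (compmat N p Phi ^\<^sub>m j) $$ (i,b) * eta (b, t - int j) \<omega>)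
            = (\<Sum>(j,b)\<in>S. (compmat N p Phi ^\<^sub>m j) $$ (i,b) * eta (b, t - int j) \<omega>)"
          unfolding S_def by (rule sum.cartesian_product)
        also have "\<dots> = (\<Sum>jb\<in>S. c (g jb) * eta (g jb) \<omega>)"
          by (intro sum.cong refl) (auto simp: c_def g_def)
        also have "\<dots> = lc eta (g ` S) c \<omega>"
          unfolding lc_def by (simp add: sum.reindex[OF injg])
        finally show ?thesis .
      qed
      have "finite (g ` S)" by (simp add: S_def)
      moreover have "\<forall>w\<in>g ` S. fst w < N" by (auto simp: g_def S_def)
      ultimately show "\<exists>W c. finite W \<and> (\<forall>w\<in>W. fst w < N) \<and>
          integrable M (\<lambda>\<omega>. \<bar>X v \<omega> - lc eta W c \<omega>\<bar>) \<and> (\<integral>\<omega>. \<bar>X v \<omega> - lc eta W c \<omega>\<bar> \<partial>M) < e"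
        using k unfolding lceq it by blast
    qed
  qed
qed

lemma mean_zero:
  assumes var: "stationary_VAR M N p Phi X eta" and v: "fst v < N"
  shows "(\<integral>\<omega>. X v \<omega> \<partial>M) = 0"
proof -
  have st: "var_stable N p Phi" and gwn: "gaussian_white_noise M N eta" and ws: "weakly_stationary M N X"
    and eqs: "\<forall>v. fst v < N \<longrightarrow> (AE \<omega> in M. X v \<omega> = var_rhs N p Phi (\<lambda>u. X u \<omega>) v + eta v \<omega>)"
    using var unfolding stationary_VAR_def by blast+
  have Xm: "X u \<in> borel_measurable M" if "fst u < N" for u using ws that unfolding weakly_stationary_def by blast
  have X2: "integrable M (\<lambda>\<omega>. (X u \<omega>)\<^sup>2)" if "fst u < N" for u using ws that unfolding weakly_stationary_def by blast
  have Xint: "integrable M (X u)" if "fst u < N" for u :: node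
    using sq_abs(1)[OF Xm[OF that] X2[OF that]] integrable_abs_iff[OF Xm[OF that]] by simp
  have em: "eta u \<in> borel_measurable M" if "fst u < N" for u by (rule gwn_meas[OF gwn that])
  define mu where "mu i = (\<integral>\<omega>. X (i,0) \<omega> \<partial>M)" for i
  have mut: "(\<integral>\<omega>. X (i,t) \<omega> \<partial>M) = mu i" if "i < N" for i t
    using ws that unfolding weakly_stationary_def mu_def by blast
  have eta0: "(\<integral>\<omega>. eta u \<omega> \<partial>M) = 0" if "fst u < N" for u :: node
  proof -
    obtain \<sigma> where \<sigma>: "\<forall>i<N. 0 < \<sigma> i" "\<forall>v. fst v < N \<longrightarrow> distributed M lborel (eta v) (normal_density 0 (\<sigma> (fst v)))"
      using gwn unfolding gaussian_white_noise_def by blast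
    show ?thesis using normal_distributed_expectation[of "\<sigma> (fst u)" "eta u" 0] \<sigma> that by auto
  qed
  have rhsint: "integrable M (\<lambda>\<omega>. var_rhs N p Phi (\<lambda>u. X u \<omega>) (i,t))" if "i < N" for i t
    unfolding var_rhs_def by (intro Bochner_Integration.integrable_sum) (simp add: Xint)
  have eqmu: "mu i = var_rhs N p Phi (\<lambda>u. mu (fst u)) (i,t)" if i: "i < N" for i t
  proof -
    have ae: "AE \<omega> in M. X (i,t) \<omega> = var_rhs N p Phi (\<lambda>u. X u \<omega>) (i,t) + eta (i,t) \<omega>"
      using eqs i by auto
    have etaint: "integrable M (eta (i,t))"
    proof (rule integrable_cong_AE_imp[OF _ em])
      show "integrable M (\<lambda>\<omega>. X (i,t) \<omega> - var_rhs N p Phi (\<lambda>u. X u \<omega>) (i,t))"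
        using Xint[of "(i,t)"] rhsint[OF i] i by simp
      show "AE \<omega> in M. X (i,t) \<omega> - var_rhs N p Phi (\<lambda>u. X u \<omega>) (i,t) = eta (i,t) \<omega>"
        using ae by auto
    qed (use i in simp)
    have "mu i = (\<integral>\<omega>. X (i,t) \<omega> \<partial>M)" using mut[OF i] by simp
    also have "\<dots> = (\<integral>\<omega>. var_rhs N p Phi (\<lambda>u. X u \<omega>) (i,t) + eta (i,t) \<omega> \<partial>M)"
      by (rule integral_cong_AE) (use Xm[of "(i,t)"] i em[of "(i,t)"] rhsint[OF i] ae in \<open>auto intro: borel_measurable_integrable\<close>)
    also have "\<dots> = (\<integral>\<omega>. var_rhs N p Phi (\<lambda>u. X u \<omega>) (i,t) \<partial>M) + (\<integral>\<omega>. eta (i,t) \<omega> \<partial>M)"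
      by (rule Bochner_Integration.integral_add[OF rhsint[OF i] etaint])
    also have "(\<integral>\<omega>. eta (i,t) \<omega> \<partial>M) = 0" using eta0 i by simp
    also have "(\<integral>\<omega>. var_rhs N p Phi (\<lambda>u. X u \<omega>) (i,t) \<partial>M) = var_rhs N p Phi (\<lambda>u. mu (fst u)) (i,t)"
    proof -
      have "(\<integral>\<omega>. var_rhs N p Phi (\<lambda>u. X u \<omega>) (i,t) \<partial>M) = (\<Sum>k\<in>{1..p}. \<integral>\<omega>. (\<Sum>j<N. Phi k i j * X (j, t - int k) \<omega>) \<partial>M)"
        unfolding var_rhs_def fst_conv snd_conv
        by (rule Bochner_Integration.integral_sum) (intro Bochner_Integration.integrable_sum, simp add: Xint)
      also have "\<dots> = (\<Sum>k\<in>{1..p}. \<Sum>j<N. Phi k i j * mu j)"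
      proof (intro sum.cong refl)
        fix k
        have "(\<integral>\<omega>. (\<Sum>j<N. Phi k i j * X (j, t - int k) \<omega>) \<partial>M) = (\<Sum>j<N. \<integral>\<omega>. Phi k i j * X (j, t - int k) \<omega> \<partial>M)"
          by (rule Bochner_Integration.integral_sum) (simp add: Xint)
        also have "\<dots> = (\<Sum>j<N. Phi k i j * mu j)" by (intro sum.cong refl) (simp add: mut)
        finally show "(\<integral>\<omega>. (\<Sum>j<N. Phi k i j * X (j, t - int k) \<omega>) \<partial>M) = (\<Sum>j<N. Phi k i j * mu j)" .
      qed
      also have "\<dots> = var_rhs N p Phi (\<lambda>u. mu (fst u)) (i,t)" by (simp add: var_rhs_def)
      finally show ?thesis .
    qed
    finally show ?thesis by simp
  qed
  define D where "D = (\<lambda>(v::node) (\<omega>::'a). mu (fst v))"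
  have ae0: "AE \<omega> in M. D (fst v, 0) \<omega> = 0"
  proof (rule decay_zero[OF st, where T=0 and B="\<Sum>i<N. \<bar>mu i\<bar>"])
    show "D u \<in> borel_measurable M" for u :: node by (simp add: D_def)
    show "integrable M (\<lambda>\<omega>. \<bar>D u \<omega>\<bar>)" for u :: node by (simp add: D_def)
    show "(\<integral>\<omega>. \<bar>D u \<omega>\<bar> \<partial>M) \<le> (\<Sum>i<N. \<bar>mu i\<bar>)" if "fst u < N" for u :: node
    proof -
      have "\<bar>mu (fst u)\<bar> \<le> (\<Sum>i<N. \<bar>mu i\<bar>)"
        by (rule member_le_sum[where f="\<lambda>i. \<bar>mu i\<bar>"]) (use that in auto)
      then show ?thesis by (simp add: D_def prob_space)
    qed
    show "AE \<omega> in M. \<forall>u. fst u < N \<longrightarrow> snd u \<le> 0 \<longrightarrow> D u \<omega> = var_rhs N p Phi (\<lambda>u. D u \<omega>) u"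
    proof (rule AE_I2, intro allI impI)
      fix \<omega> and u :: node assume "fst u < N"
      then show "D u \<omega> = var_rhs N p Phi (\<lambda>u. D u \<omega>) u"
        using eqmu[of "fst u" "snd u"] by (simp add: D_def)
    qed
  qed (use v in auto)
  then have "mu (fst v) = 0" by (simp add: D_def prob_space.AE_const[OF prob_space_axioms])
  then show ?thesis using mut[OF v, of "snd v"] by simp
qed

end

lemma var_rhs_lin:
  "var_rhs N p Phi (\<lambda>u. f u + (\<Sum>l\<in>L. g l u * d l)) v = var_rhs N p Phi f v + (\<Sum>l\<in>L. var_rhs N p Phi (g l) v * d l)"
proof -
  have "var_rhs N p Phi (\<lambda>u. f u + (\<Sum>l\<in>L. g l u * d l)) v
      = var_rhs N p Phi f v + (\<Sum>k\<in>{1..p}. \<Sum>j<N. \<Sum>l\<in>L. Phi k (fst v) j * (g l (j, snd v - int k) * d l))"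
    unfolding var_rhs_def by (simp add: distrib_left sum.distrib sum_distrib_left)
  also have "(\<Sum>k\<in>{1..p}. \<Sum>j<N. \<Sum>l\<in>L. Phi k (fst v) j * (g l (j, snd v - int k) * d l))
      = (\<Sum>k\<in>{1..p}. \<Sum>l\<in>L. \<Sum>j<N. Phi k (fst v) j * (g l (j, snd v - int k) * d l))"
    by (intro sum.cong refl sum.swap)
  also have "\<dots> = (\<Sum>l\<in>L. \<Sum>k\<in>{1..p}. \<Sum>j<N. Phi k (fst v) j * (g l (j, snd v - int k) * d l))"
    by (rule sum.swap)
  also have "\<dots> = (\<Sum>l\<in>L. var_rhs N p Phi (g l) v * d l)"
    unfolding var_rhs_def by (simp add: sum_distrib_right mult.assoc)
  finally show ?thesis .
qed

lemma var_rhs_diff: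
  "var_rhs N p Phi (\<lambda>u. f u - g u) v = var_rhs N p Phi f v - var_rhs N p Phi g v"
  unfolding var_rhs_def by (simp add: right_diff_distrib sum_subtractf)

lemma hfun_bound:
  assumes st: "var_stable N p Phi" and x: "x \<in> XS" and fin: "finite XS" and ok: "\<forall>u\<in>XS. fst u < N"
  shows "\<exists>H\<ge>0. \<forall>v. \<bar>hfun N p Phi XS x v\<bar> \<le> H"
proof -
  define h where "h = hfun N p Phi XS x"
  define T1 where "T1 = Max (snd ` XS)"
  have xN: "fst x < N" using x ok by blast
  have T1ge: "snd u \<le> T1" if "u \<in> XS" for u unfolding T1_def using fin that by (intro Max_ge) auto
  have hom: "h (i,t) = var_rhs N p Phi h (i,t)" if "i < N" "t > T1" for i t
  proof -
    have "(i,t) \<notin> XS" using T1ge[of "(i,t)"] that by auto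
    then show ?thesis unfolding h_def using theta_rec[of "(i,t)" N XS x p Phi] that x xN
      by (simp add: hfun_def)
  qed
  have "\<exists>G\<ge>0. \<forall>i t. i < N \<longrightarrow> t > T1 \<longrightarrow> \<bar>h (i,t)\<bar> \<le> G"
  proof (cases "p = 0")
    case True
    then show ?thesis using hom by (intro exI[of _ 0]) (simp add: var_rhs_def)
  next
    case False
    then have p: "p \<ge> 1" by simp
    obtain c r where cr: "0 \<le> c" "0 < r" "r < 1"
      "\<And>k a b. a < N*p \<Longrightarrow> b < N*p \<Longrightarrow> \<bar>(compmat N p Phi ^\<^sub>m k) $$ (a,b)\<bar> \<le> c * r^k"
      using compmat_decay[OF st] by blast
    define S0 where "S0 = (\<Sum>b<N*p. \<bar>h (b mod N, T1 - int (b div N))\<bar>)"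
    have S00: "S0 \<ge> 0" by (simp add: S0_def)
    show ?thesis
    proof (intro exI[of _ "c * S0"] conjI allI impI)
      show "0 \<le> c * S0" using cr S00 by simp
      fix i t assume i: "i < N" and t: "T1 < t"
      define k where "k = nat (t - T1)"
      have tk: "t - int k = T1" using t by (simp add: k_def)
      have iN: "i < N*p" using i p by (metis le_less_trans mult.right_neutral mult_le_mono2 nat_less_le)
      have "h (i,t) = (\<Sum>b<N*p. (compmat N p Phi ^\<^sub>m k) $$ (i,b) * h (b mod N, t - int k - int (b div N)))
          + (\<Sum>j<k. \<Sum>b<N. (compmat N p Phi ^\<^sub>m j) $$ (i,b) * (\<lambda>_. 0) (b, t - int j))"
      proof (rule rep_entry[OF _ i p])
        fix i' s assume "i' < N" "t - int k < s" "s \<le> t"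
        then show "h (i', s) = var_rhs N p Phi h (i', s) + (\<lambda>_. 0) (i', s)"
          using hom tk by simp
      qed
      then have "h (i,t) = (\<Sum>b<N*p. (compmat N p Phi ^\<^sub>m k) $$ (i,b) * h (b mod N, T1 - int (b div N)))"
        using tk by simp
      then have "\<bar>h (i,t)\<bar> \<le> (\<Sum>b<N*p. \<bar>(compmat N p Phi ^\<^sub>m k) $$ (i,b)\<bar> * \<bar>h (b mod N, T1 - int (b div N))\<bar>)"
        by (simp add: order.trans[OF sum_abs] abs_mult)
      also have "\<dots> \<le> (\<Sum>b<N*p. c * \<bar>h (b mod N, T1 - int (b div N))\<bar>)"
      proof (rule sum_mono)
        fix b assume b: "b \<in> {..<N*p}"
        have "\<bar>(compmat N p Phi ^\<^sub>m k) $$ (i,b)\<bar> \<le> c * r^k" using cr(4)[OF iN, of b k] b by simp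
        also have "\<dots> \<le> c * 1" using cr by (intro mult_left_mono power_le_one) auto
        finally show "\<bar>(compmat N p Phi ^\<^sub>m k) $$ (i,b)\<bar> * \<bar>h (b mod N, T1 - int (b div N))\<bar> \<le> c * \<bar>h (b mod N, T1 - int (b div N))\<bar>"
          by (intro mult_right_mono) auto
      qed
      also have "\<dots> = c * S0" by (simp add: S0_def sum_distrib_left)
      finally show "\<bar>h (i,t)\<bar> \<le> c * S0" .
    qed
  qed
  then obtain G where G: "G \<ge> 0" "\<And>i t. i < N \<Longrightarrow> t > T1 \<Longrightarrow> \<bar>h (i,t)\<bar> \<le> G" by blast
  define F where "F = {..<N} \<times> {snd x<..T1}"
  have finF: "finite F" by (simp add: F_def)
  define H where "H = 1 + G + (\<Sum>u\<in>F. \<bar>h u\<bar>)"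
  have SF: "(\<Sum>u\<in>F. \<bar>h u\<bar>) \<ge> 0" by (simp add: sum_nonneg)
  show ?thesis
  proof (intro exI[of _ H] conjI allI)
    show "0 \<le> H" using G SF by (simp add: H_def)
    fix v :: node
    obtain i t where v: "v = (i,t)" by (cases v)
    show "\<bar>hfun N p Phi XS x v\<bar> \<le> H"
    proof (cases "v \<in> XS")
      case True
      then have "\<bar>h v\<bar> \<le> 1" by (simp add: h_def hfun_def)
      then show ?thesis using G SF unfolding H_def h_def[symmetric] by linarith
    next
      case vX: False
      then have hv: "h v = theta N p Phi XS x v" by (simp add: h_def hfun_def)
      show ?thesis
      proof (cases "i < N")
        case False
        then have "h v = 0" using hv theta_zero_N[of v N p Phi XS x] v by simp
        then show ?thesis using G SF unfolding H_def h_def[symmetric] by linarith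
      next
        case i: True
        show ?thesis
        proof (cases "t > T1")
          case True
          then have "\<bar>h v\<bar> \<le> G" using G(2)[OF i True] v by simp
          then show ?thesis using G SF unfolding H_def h_def[symmetric] by linarith
        next
          case tle: False
          show ?thesis
          proof (cases "t \<le> snd x")
            case True
            have "v \<noteq> x" using vX x by auto
            then have "h v = 0" using hv theta_zero_time[of v x N p Phi XS] True v by simp
            then show ?thesis using G SF unfolding H_def h_def[symmetric] by linarith
          next
            case False
            then have "v \<in> F" using tle i v by (auto simp: F_def)
            then have "\<bar>h v\<bar> \<le> (\<Sum>u\<in>F. \<bar>h u\<bar>)" by (intro member_le_sum finF) auto
            then show ?thesis using G SF unfolding H_def h_def[symmetric] by linarith
          qed
        qed
      qed
    qed
  qed
qed

context prob_space
begin

lemma sq_diff: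
  fixes a b :: "'a \<Rightarrow> real"
  assumes am: "a \<in> borel_measurable M" and bm: "b \<in> borel_measurable M"
    and ai: "integrable M (\<lambda>\<omega>. (a \<omega>)\<^sup>2)" and bi: "integrable M (\<lambda>\<omega>. (b \<omega>)\<^sup>2)"
  shows "integrable M (\<lambda>\<omega>. (a \<omega> - b \<omega>)\<^sup>2)"
    "(\<integral>\<omega>. (a \<omega> - b \<omega>)\<^sup>2 \<partial>M) \<le> 2 * ((\<integral>\<omega>. (a \<omega>)\<^sup>2 \<partial>M) + (\<integral>\<omega>. (b \<omega>)\<^sup>2 \<partial>M))"
proof -
  define f where "f = (\<lambda>i \<omega>. if i then a \<omega> else - b \<omega>)"
  have e: "(\<Sum>i\<in>{True, False}. f i \<omega>) = a \<omega> - b \<omega>" for \<omega> by (simp add: f_def)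
  have fm: "f i \<in> borel_measurable M" for i using am bm by (cases i) (simp_all add: f_def)
  have fi: "integrable M (\<lambda>\<omega>. (f i \<omega>)\<^sup>2)" for i using ai bi by (cases i) (simp_all add: f_def)
  note S = sq_sum[of "{True, False}" f, OF _ fm fi]
  show "integrable M (\<lambda>\<omega>. (a \<omega> - b \<omega>)\<^sup>2)" using S(1) by (simp add: e)
  show "(\<integral>\<omega>. (a \<omega> - b \<omega>)\<^sup>2 \<partial>M) \<le> 2 * ((\<integral>\<omega>. (a \<omega>)\<^sup>2 \<partial>M) + (\<integral>\<omega>. (b \<omega>)\<^sup>2 \<partial>M))"
    using S(2) by (simp add: e f_def)
qed

lemma interv_unique:
  assumes st: "var_stable N p Phi" and Xs_ok: "\<forall>v\<in>set Xs. fst v < N"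
    and I1: "intervened_process M N p Phi eta Xs x Xi1"
    and I2: "intervened_process M N p Phi eta Xs x Xi2"
    and Y: "fst Y < N"
  shows "AE \<omega> in M. Xi1 Y \<omega> = Xi2 Y \<omega>"
proof -
  have m1: "\<And>v. fst v < N \<Longrightarrow> Xi1 v \<in> borel_measurable M"
    and s1: "\<And>v. fst v < N \<Longrightarrow> integrable M (\<lambda>\<omega>. (Xi1 v \<omega>)\<^sup>2)"
    and p1: "\<And>l. l < length Xs \<Longrightarrow> \<forall>\<omega>\<in>space M. Xi1 (Xs ! l) \<omega> = x l"
    and e1: "\<forall>v. fst v < N \<longrightarrow> v \<notin> set Xs \<longrightarrow> (AE \<omega> in M. Xi1 v \<omega> = var_rhs N p Phi (\<lambda>u. Xi1 u \<omega>) v + eta v \<omega>)"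
    using I1 unfolding intervened_process_def by blast+
  obtain B1 where B1: "\<And>v. fst v < N \<Longrightarrow> (\<integral>\<omega>. (Xi1 v \<omega>)\<^sup>2 \<partial>M) \<le> B1"
    using I1 unfolding intervened_process_def by blast
  have m2: "\<And>v. fst v < N \<Longrightarrow> Xi2 v \<in> borel_measurable M"
    and s2: "\<And>v. fst v < N \<Longrightarrow> integrable M (\<lambda>\<omega>. (Xi2 v \<omega>)\<^sup>2)"
    and p2: "\<And>l. l < length Xs \<Longrightarrow> \<forall>\<omega>\<in>space M. Xi2 (Xs ! l) \<omega> = x l"
    and e2: "\<forall>v. fst v < N \<longrightarrow> v \<notin> set Xs \<longrightarrow> (AE \<omega> in M. Xi2 v \<omega> = var_rhs N p Phi (\<lambda>u. Xi2 u \<omega>) v + eta v \<omega>)"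
    using I2 unfolding intervened_process_def by blast+
  obtain B2 where B2: "\<And>v. fst v < N \<Longrightarrow> (\<integral>\<omega>. (Xi2 v \<omega>)\<^sup>2 \<partial>M) \<le> B2"
    using I2 unfolding intervened_process_def by blast
  define D where "D = (\<lambda>(v::node) \<omega>. Xi1 v \<omega> - Xi2 v \<omega>)"
  have Dm: "D v \<in> borel_measurable M" if "fst v < N" for v :: node
    using m1[OF that] m2[OF that] by (simp add: D_def)
  have D2: "integrable M (\<lambda>\<omega>. (D v \<omega>)\<^sup>2)" if "fst v < N" for v :: node
    using sq_diff(1)[OF m1[OF that] m2[OF that] s1[OF that] s2[OF that]] by (simp add: D_def)
  have Di: "integrable M (\<lambda>\<omega>. \<bar>D v \<omega>\<bar>)" if "fst v < N" for v :: node
    by (rule sq_abs(1)[OF Dm[OF that] D2[OF that]])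
  have DB: "(\<integral>\<omega>. \<bar>D v \<omega>\<bar> \<partial>M) \<le> 1 + 2 * (B1 + B2)" if "fst v < N" for v :: node
  proof -
    have "(\<integral>\<omega>. \<bar>D v \<omega>\<bar> \<partial>M) \<le> 1 + (\<integral>\<omega>. (D v \<omega>)\<^sup>2 \<partial>M)" by (rule sq_abs(2)[OF Dm[OF that] D2[OF that]])
    also have "(\<integral>\<omega>. (D v \<omega>)\<^sup>2 \<partial>M) \<le> 2 * ((\<integral>\<omega>. (Xi1 v \<omega>)\<^sup>2 \<partial>M) + (\<integral>\<omega>. (Xi2 v \<omega>)\<^sup>2 \<partial>M))"
      using sq_diff(2)[OF m1[OF that] m2[OF that] s1[OF that] s2[OF that]] by (simp add: D_def)
    also have "\<dots> \<le> 2 * (B1 + B2)" using B1[OF that] B2[OF that] by simp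
    finally show ?thesis by simp
  qed
  have aeD: "AE \<omega> in M. \<forall>v. fst v < N \<longrightarrow> v \<notin> set Xs \<longrightarrow> D v \<omega> = var_rhs N p Phi (\<lambda>u. D u \<omega>) v"
  proof -
    have a1: "AE \<omega> in M. \<forall>v. fst v < N \<longrightarrow> (v \<notin> set Xs \<longrightarrow> Xi1 v \<omega> = var_rhs N p Phi (\<lambda>u. Xi1 u \<omega>) v + eta v \<omega>)"
      by (rule ae_var_all) (use e1 in \<open>auto intro: eventually_mono\<close>)
    have a2: "AE \<omega> in M. \<forall>v. fst v < N \<longrightarrow> (v \<notin> set Xs \<longrightarrow> Xi2 v \<omega> = var_rhs N p Phi (\<lambda>u. Xi2 u \<omega>) v + eta v \<omega>)"
      by (rule ae_var_all) (use e2 in \<open>auto intro: eventually_mono\<close>)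
    show ?thesis using a1 a2
    proof eventually_elim
      case (elim \<omega>)
      show ?case
      proof (intro allI impI)
        fix v :: node assume v: "fst v < N" "v \<notin> set Xs"
        have h1: "Xi1 v \<omega> = var_rhs N p Phi (\<lambda>u. Xi1 u \<omega>) v + eta v \<omega>" using elim(1) v by blast
        have h2: "Xi2 v \<omega> = var_rhs N p Phi (\<lambda>u. Xi2 u \<omega>) v + eta v \<omega>" using elim(2) v by blast
        have "var_rhs N p Phi (\<lambda>u. D u \<omega>) v = var_rhs N p Phi (\<lambda>u. Xi1 u \<omega>) v - var_rhs N p Phi (\<lambda>u. Xi2 u \<omega>) v"
          unfolding D_def by (simp add: var_rhs_diff)
        then show "D v \<omega> = var_rhs N p Phi (\<lambda>u. D u \<omega>) v" using h1 h2 by (simp add: D_def)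
      qed
    qed
  qed
  define T where "T = (if Xs = [] then snd Y else Min (snd ` set Xs) - 1)"
  have notX: "v \<notin> set Xs" if "snd v \<le> T" for v :: node
  proof
    assume v: "v \<in> set Xs"
    then have "Xs \<noteq> []" by auto
    then have "Min (snd ` set Xs) \<le> snd v" using v by (intro Min_le) auto
    then show False using that v \<open>Xs \<noteq> []\<close> by (auto simp: T_def)
  qed
  have pX: "\<forall>\<omega>\<in>space M. D v \<omega> = 0" if vX: "v \<in> set Xs" for v :: node
  proof -
    obtain l where l: "l < length Xs" "v = Xs ! l" using vX unfolding in_set_conv_nth by blast
    show ?thesis using p1[OF l(1)] p2[OF l(1)] l by (simp add: D_def)
  qed
  have base: "AE \<omega> in M. D (i,s) \<omega> = 0" if "i < N" "s \<le> T" for i s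
  proof (rule decay_zero[OF st Dm Di DB _ that])
    show "AE \<omega> in M. \<forall>v. fst v < N \<longrightarrow> snd v \<le> T \<longrightarrow> D v \<omega> = var_rhs N p Phi (\<lambda>u. D u \<omega>) v"
      using aeD by eventually_elim (use notX in blast)
  qed
  have step: "\<forall>i<N. \<forall>s. s \<le> T + int n \<longrightarrow> (AE \<omega> in M. D (i,s) \<omega> = 0)" for n
  proof (induct n)
    case 0 then show ?case using base by simp
  next
    case (Suc n)
    show ?case
    proof (intro allI impI)
      fix i s assume i: "i < N" and s: "s \<le> T + int (Suc n)"
      show "AE \<omega> in M. D (i,s) \<omega> = 0"
      proof (cases "s \<le> T + int n")
        case True then show ?thesis using Suc i by blast
      next
        case False
        show ?thesis
        proof (cases "(i,s) \<in> set Xs")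
          case True
          then show ?thesis using pX[OF True] by (intro AE_I2) auto
        next
          case nX: False
          have par: "AE \<omega> in M. \<forall>k\<in>{1..p}. \<forall>j\<in>{..<N}. D (j, s - int k) \<omega> = 0"
          proof (intro AE_finite_allI)
            fix k j assume "k \<in> {1..p}" "j \<in> {..<N}"
            then show "AE \<omega> in M. D (j, s - int k) \<omega> = 0" using Suc s by auto
          qed simp_all
          show ?thesis using par aeD
          proof eventually_elim
            case (elim \<omega>)
            then have "D (i,s) \<omega> = var_rhs N p Phi (\<lambda>u. D u \<omega>) (i,s)" using i nX by simp
            also have "\<dots> = 0" unfolding var_rhs_def using elim(1) by simp
            finally show ?case .
          qed
        qed
      qed
    qed
  qed
  obtain i s where Ys: "Y = (i,s)" by (cases Y)
  have "s \<le> T + int (nat (s - T))" by simp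
  then have "AE \<omega> in M. D (i,s) \<omega> = 0" using step[of "nat (s - T)"] Y Ys by simp
  then show ?thesis by eventually_elim (simp add: D_def Ys)
qed

end

context prob_space
begin

lemma interv_exists:
  fixes x :: "nat \<Rightarrow> real"
  assumes var: "stationary_VAR M N p Phi X eta"
    and Xs_ok: "\<forall>v\<in>set Xs. fst v < N" and dXs: "distinct Xs"
  defines "Xi0 \<equiv> (\<lambda>v \<omega>. X v \<omega> + (\<Sum>l<length Xs. hfun N p Phi (set Xs) (Xs ! l) v * (x l - X (Xs ! l) \<omega>)))"
  shows "intervened_process M N p Phi eta Xs x Xi0"
    and "\<And>Y. fst Y < N \<Longrightarrow> Y \<notin> set Xs \<Longrightarrow> (\<integral>\<omega>. Xi0 Y \<omega> \<partial>M) = (\<Sum>l<length Xs. theta N p Phi (set Xs) (Xs ! l) Y * x l)"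
proof -
  have st: "var_stable N p Phi" and gwn: "gaussian_white_noise M N eta" and ws: "weakly_stationary M N X"
    and eqs: "\<forall>v. fst v < N \<longrightarrow> (AE \<omega> in M. X v \<omega> = var_rhs N p Phi (\<lambda>u. X u \<omega>) v + eta v \<omega>)"
    using var unfolding stationary_VAR_def by blast+
  have Xm: "X u \<in> borel_measurable M" if "fst u < N" for u using ws that unfolding weakly_stationary_def by blast
  have X2: "integrable M (\<lambda>\<omega>. (X u \<omega>)\<^sup>2)" if "fst u < N" for u using ws that unfolding weakly_stationary_def by blast
  have Xint: "integrable M (X u)" if "fst u < N" for u :: node
    using sq_abs(1)[OF Xm[OF that] X2[OF that]] integrable_abs_iff[OF Xm[OF that]] by simp
  define m where "m = length Xs"
  define hl where "hl l = hfun N p Phi (set Xs) (Xs ! l)" for l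
  define d where "d l \<omega> = x l - X (Xs ! l) \<omega>" for l \<omega>
  have Xi0_eq: "Xi0 v \<omega> = X v \<omega> + (\<Sum>l<m. hl l v * d l \<omega>)" for v \<omega>
    by (simp add: Xi0_def m_def hl_def d_def)
  have XsN: "fst (Xs ! l) < N" if "l < m" for l using Xs_ok that by (simp add: m_def)
  have "\<forall>l. \<exists>H\<ge>0. l < m \<longrightarrow> (\<forall>v. \<bar>hl l v\<bar> \<le> H)"
  proof
    fix l
    show "\<exists>H\<ge>0. l < m \<longrightarrow> (\<forall>v. \<bar>hl l v\<bar> \<le> H)"
    proof (cases "l < m")
      case True
      then have "Xs ! l \<in> set Xs" by (simp add: m_def)
      then obtain H where "H \<ge> 0" "\<forall>v. \<bar>hl l v\<bar> \<le> H"
        using hfun_bound[OF st _ _ Xs_ok] unfolding hl_def by blast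
      then show ?thesis by blast
    qed (intro exI[of _ 0], simp)
  qed
  from choice[OF this] obtain Hf where Hf: "\<forall>l. Hf l \<ge> 0 \<and> (l < m \<longrightarrow> (\<forall>v. \<bar>hl l v\<bar> \<le> Hf l))" by blast
  define H where "H = (\<Sum>l<m. Hf l)"
  have H0: "H \<ge> 0" unfolding H_def using Hf by (simp add: sum_nonneg)
  have Hb: "\<bar>hl l v\<bar> \<le> H" if "l < m" for l v
  proof -
    have "\<bar>hl l v\<bar> \<le> Hf l" using Hf that by blast
    also have "Hf l \<le> H" unfolding H_def using Hf that by (intro member_le_sum) auto
    finally show ?thesis .
  qed
  have dm: "d l \<in> borel_measurable M" if "l < m" for l using Xm[OF XsN[OF that]] by (simp add: d_def[abs_def])
  have d2: "integrable M (\<lambda>\<omega>. (d l \<omega>)\<^sup>2)" if "l < m" for l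
    using sq_diff(1)[of "\<lambda>_. x l" "X (Xs ! l)"] Xm[OF XsN[OF that]] X2[OF XsN[OF that]] by (simp add: d_def)
  obtain B2 where B2: "\<And>v. fst v < N \<Longrightarrow> (\<integral>\<omega>. (X v \<omega>)\<^sup>2 \<partial>M) \<le> B2"
    using X_bound[OF ws] by blast
  define C where "C = real (Suc m) * (B2 + (\<Sum>l<m. H\<^sup>2 * (\<integral>\<omega>. (d l \<omega>)\<^sup>2 \<partial>M)))"
  define F where "F v i \<omega> = (case i of 0 \<Rightarrow> X v \<omega> | Suc l \<Rightarrow> hl l v * d l \<omega>)" for v i \<omega>
  have XiF: "Xi0 v \<omega> = (\<Sum>i<Suc m. F v i \<omega>)" for v \<omega>
    unfolding Xi0_eq sum.lessThan_Suc_shift by (simp add: F_def)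
  have Fm: "F v i \<in> borel_measurable M" if "fst v < N" "i \<in> {..<Suc m}" for v i
    using that Xm dm by (cases i) (auto simp: F_def[abs_def])
  have F2: "integrable M (\<lambda>\<omega>. (F v i \<omega>)\<^sup>2)" if "fst v < N" "i \<in> {..<Suc m}" for v i
    using that X2 d2 by (cases i) (auto simp: F_def power_mult_distrib)
  have sq: "integrable M (\<lambda>\<omega>. (Xi0 v \<omega>)\<^sup>2) \<and> (\<integral>\<omega>. (Xi0 v \<omega>)\<^sup>2 \<partial>M) \<le> C" if v: "fst v < N" for v
  proof -
    have S1: "integrable M (\<lambda>\<omega>. (\<Sum>i\<in>{..<Suc m}. F v i \<omega>)\<^sup>2)"
      by (rule sq_sum(1)) (auto intro: Fm[OF v] F2[OF v])
    have S2: "(\<integral>\<omega>. (\<Sum>i\<in>{..<Suc m}. F v i \<omega>)\<^sup>2 \<partial>M) \<le> real (card {..<Suc m}) * (\<Sum>i\<in>{..<Suc m}. \<integral>\<omega>. (F v i \<omega>)\<^sup>2 \<partial>M)"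
      by (rule sq_sum(2)) (auto intro: Fm[OF v] F2[OF v])
    have "(\<Sum>i<Suc m. \<integral>\<omega>. (F v i \<omega>)\<^sup>2 \<partial>M) = (\<integral>\<omega>. (X v \<omega>)\<^sup>2 \<partial>M) + (\<Sum>l<m. (hl l v)\<^sup>2 * (\<integral>\<omega>. (d l \<omega>)\<^sup>2 \<partial>M))"
      unfolding sum.lessThan_Suc_shift by (simp add: F_def power_mult_distrib)
    also have "\<dots> \<le> B2 + (\<Sum>l<m. H\<^sup>2 * (\<integral>\<omega>. (d l \<omega>)\<^sup>2 \<partial>M))"
    proof (rule add_mono[OF B2[OF v] sum_mono])
      fix l assume l: "l \<in> {..<m}"
      have "(hl l v)\<^sup>2 \<le> H\<^sup>2" using Hb[of l v] l by (simp add: abs_le_square_iff[symmetric] abs_of_nonneg H0)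
      then show "(hl l v)\<^sup>2 * (\<integral>\<omega>. (d l \<omega>)\<^sup>2 \<partial>M) \<le> H\<^sup>2 * (\<integral>\<omega>. (d l \<omega>)\<^sup>2 \<partial>M)"
        by (intro mult_right_mono) simp_all
    qed
    finally have "(\<Sum>i<Suc m. \<integral>\<omega>. (F v i \<omega>)\<^sup>2 \<partial>M) \<le> B2 + (\<Sum>l<m. H\<^sup>2 * (\<integral>\<omega>. (d l \<omega>)\<^sup>2 \<partial>M))" .
    then have "real (card {..<Suc m}) * (\<Sum>i<Suc m. \<integral>\<omega>. (F v i \<omega>)\<^sup>2 \<partial>M) \<le> C"
      unfolding C_def card_lessThan by (intro mult_left_mono) auto
    then show ?thesis unfolding XiF using S1 order.trans[OF S2] by blast
  qed
  have ptw: "Xi0 (Xs ! l) \<omega> = x l" if l: "l < m" for l \<omega>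
  proof -
    have "hl l' (Xs ! l) = (if l' = l then 1 else 0)" if "l' < m" for l'
      using l that dXs by (simp add: hl_def hfun_def m_def nth_eq_iff_index_eq)
    then have "(\<Sum>l'<m. hl l' (Xs ! l) * d l' \<omega>) = (\<Sum>l'<m. if l' = l then d l' \<omega> else 0)"
      by (intro sum.cong refl) simp
    also have "\<dots> = d l \<omega>" using l by simp
    finally show ?thesis by (simp add: Xi0_eq d_def)
  qed
  have hrec: "hl l v = var_rhs N p Phi (hl l) v" if "l < m" "fst v < N" "v \<notin> set Xs" for l v
  proof -
    have "hl l v = theta N p Phi (set Xs) (Xs ! l) v" using that by (simp add: hl_def hfun_def)
    also have "\<dots> = var_rhs N p Phi (hl l) v"
      unfolding hl_def by (rule theta_rec) (use that XsN in \<open>auto simp: m_def\<close>)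
    finally show ?thesis .
  qed
  show "intervened_process M N p Phi eta Xs x Xi0"
    unfolding intervened_process_def
  proof (intro conjI allI impI ballI)
    fix v :: node assume v: "fst v < N"
    show "Xi0 v \<in> borel_measurable M"
    proof -
      have "(\<lambda>\<omega>. \<Sum>i<Suc m. F v i \<omega>) \<in> borel_measurable M"
        by (intro borel_measurable_sum Fm[OF v])
      then show ?thesis unfolding XiF[abs_def] .
    qed
    show "integrable M (\<lambda>\<omega>. (Xi0 v \<omega>)\<^sup>2)" using sq[OF v] by blast
  next
    show "\<exists>B. \<forall>v. fst v < N \<longrightarrow> (\<integral>\<omega>. (Xi0 v \<omega>)\<^sup>2 \<partial>M) \<le> B" using sq by blast
  next
    fix l \<omega> assume "l < length Xs" "\<omega> \<in> space M"
    then show "Xi0 (Xs ! l) \<omega> = x l" using ptw by (simp add: m_def)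
  next
    fix v :: node assume v: "fst v < N" "v \<notin> set Xs"
    have "AE \<omega> in M. X v \<omega> = var_rhs N p Phi (\<lambda>u. X u \<omega>) v + eta v \<omega>" using eqs v by blast
    then show "AE \<omega> in M. Xi0 v \<omega> = var_rhs N p Phi (\<lambda>u. Xi0 u \<omega>) v + eta v \<omega>"
    proof eventually_elim
      case (elim \<omega>)
      have "var_rhs N p Phi (\<lambda>u. Xi0 u \<omega>) v = var_rhs N p Phi (\<lambda>u. X u \<omega> + (\<Sum>l<m. hl l u * d l \<omega>)) v"
        by (simp add: Xi0_eq)
      also have "\<dots> = var_rhs N p Phi (\<lambda>u. X u \<omega>) v + (\<Sum>l<m. var_rhs N p Phi (hl l) v * d l \<omega>)"
        by (rule var_rhs_lin)
      also have "(\<Sum>l<m. var_rhs N p Phi (hl l) v * d l \<omega>) = (\<Sum>l<m. hl l v * d l \<omega>)"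
        using hrec v by simp
      finally show ?case using elim by (simp add: Xi0_eq)
    qed
  qed
  fix Y :: node assume Y: "fst Y < N" "Y \<notin> set Xs"
  have "(\<integral>\<omega>. Xi0 Y \<omega> \<partial>M) = (\<integral>\<omega>. X Y \<omega> \<partial>M) + (\<integral>\<omega>. (\<Sum>l<m. hl l Y * d l \<omega>) \<partial>M)"
    unfolding Xi0_eq
    by (rule Bochner_Integration.integral_add[OF Xint[OF Y(1)]])
       (intro Bochner_Integration.integrable_sum, simp add: d_def[abs_def] Xint XsN)
  also have "(\<integral>\<omega>. X Y \<omega> \<partial>M) = 0" by (rule mean_zero[OF var Y(1)])
  also have "(\<integral>\<omega>. (\<Sum>l<m. hl l Y * d l \<omega>) \<partial>M) = (\<Sum>l<m. \<integral>\<omega>. hl l Y * d l \<omega> \<partial>M)"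
    by (rule Bochner_Integration.integral_sum) (simp add: d_def[abs_def] Xint XsN)
  also have "\<dots> = (\<Sum>l<m. hl l Y * x l)"
  proof (intro sum.cong refl)
    fix l assume l: "l \<in> {..<m}"
    have "(\<integral>\<omega>. d l \<omega> \<partial>M) = x l - (\<integral>\<omega>. X (Xs ! l) \<omega> \<partial>M)"
      unfolding d_def using Xint[OF XsN] l by (simp add: prob_space)
    also have "(\<integral>\<omega>. X (Xs ! l) \<omega> \<partial>M) = 0" using mean_zero[OF var XsN] l by simp
    finally show "(\<integral>\<omega>. hl l Y * d l \<omega> \<partial>M) = hl l Y * x l" by simp
  qed
  also have "\<dots> = (\<Sum>l<length Xs. theta N p Phi (set Xs) (Xs ! l) Y * x l)"
    using Y by (simp add: hl_def hfun_def m_def)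
  finally show "(\<integral>\<omega>. Xi0 Y \<omega> \<partial>M) = (\<Sum>l<length Xs. theta N p Phi (set Xs) (Xs ! l) Y * x l)" by simp
qed

end

theorem proposition1:
  fixes M :: "'a measure" and N p :: nat and Phi :: "nat \<Rightarrow> nat \<Rightarrow> nat \<Rightarrow> real"
    and X eta :: "node \<Rightarrow> 'a \<Rightarrow> real" and Xs Ys :: "node list"
  assumes var: "stationary_VAR M N p Phi X eta"
    and Xs_ok: "\<forall>v\<in>set Xs. fst v < N" and Ys_ok: "\<forall>v\<in>set Ys. fst v < N"
    and dXs: "distinct Xs" and dYs: "distinct Ys"
    and disj: "set Xs \<inter> set Ys = {}"
  shows "(\<forall>j<length Ys. \<exists>S c Eta. finite S \<and> S \<subseteq> anc_not N p Phi (Ys ! j) (set Xs) \<and> gaussian_rv M Eta \<and>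
            (\<forall>\<omega>\<in>space M. X (Ys ! j) \<omega> =
               (\<Sum>l<length Xs. theta N p Phi (set Xs) (Xs ! l) (Ys ! j) * X (Xs ! l) \<omega>)
               + (\<Sum>v\<in>S. c v * X v \<omega>) + Eta \<omega>))
       \<and> (\<forall>x::nat \<Rightarrow> real.
            (\<exists>Xi. intervened_process M N p Phi eta Xs x Xi) \<and>
            (\<forall>Xi. intervened_process M N p Phi eta Xs x Xi \<longrightarrow>
               (\<forall>j<length Ys. (\<integral>\<omega>. Xi (Ys ! j) \<omega> \<partial>M) =
                  (\<Sum>l<length Xs. theta N p Phi (set Xs) (Xs ! l) (Ys ! j) * x l))))"
proof -
  have PS: "prob_space M" and st: "var_stable N p Phi" and gwn: "gaussian_white_noise M N eta"
    using var unfolding stationary_VAR_def by blast+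
  interpret prob_space M by (rule PS)
  have part1: "\<forall>j<length Ys. \<exists>S c Eta. finite S \<and> S \<subseteq> anc_not N p Phi (Ys ! j) (set Xs) \<and> gaussian_rv M Eta \<and>
            (\<forall>\<omega>\<in>space M. X (Ys ! j) \<omega> =
               (\<Sum>l<length Xs. theta N p Phi (set Xs) (Xs ! l) (Ys ! j) * X (Xs ! l) \<omega>)
               + (\<Sum>v\<in>S. c v * X v \<omega>) + Eta \<omega>)"
  proof (intro allI impI)
    fix j assume j: "j < length Ys"
    define Y where "Y = Ys ! j"
    have YN: "fst Y < N" using Ys_ok j by (simp add: Y_def)
    define th where "th l = theta N p Phi (set Xs) (Xs ! l) Y" for l
    define Eta where "Eta \<omega> = X Y \<omega> - (\<Sum>l<length Xs. th l * X (Xs ! l) \<omega>)" for \<omega>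
    have G1: "GL M N eta (\<lambda>\<omega>. X Y \<omega> + (-1) * (\<Sum>l<length Xs. th l * X (Xs ! l) \<omega>))"
    proof (rule GL_add[OF gwn GL_X[OF var YN] GL_cmult[OF gwn]])
      show "GL M N eta (\<lambda>\<omega>. \<Sum>l<length Xs. th l * X (Xs ! l) \<omega>)"
      proof (rule GL_sum[OF gwn])
        fix l assume "l \<in> {..<length Xs}"
        then have "fst (Xs ! l) < N" using Xs_ok by simp
        then show "GL M N eta (\<lambda>\<omega>. th l * X (Xs ! l) \<omega>)" by (rule GL_cmult[OF gwn GL_X[OF var]])
      qed simp
    qed
    have G2: "GL M N eta Eta"
    proof (rule GL_cong_AE[OF G1 _ _ gwn])
      have "(\<lambda>\<omega>. X Y \<omega> + (-1) * (\<Sum>l<length Xs. th l * X (Xs ! l) \<omega>)) \<in> borel_measurable M"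
        by (rule GL_meas[OF G1])
      then show "Eta \<in> borel_measurable M" unfolding Eta_def by simp
      show "AE \<omega> in M. X Y \<omega> + (-1) * (\<Sum>l<length Xs. th l * X (Xs ! l) \<omega>) = Eta \<omega>"
        by (rule AE_I2) (simp add: Eta_def)
    qed
    have gE: "gaussian_rv M Eta" by (rule GL_gaussian[OF gwn G2])
    show "\<exists>S c Eta. finite S \<and> S \<subseteq> anc_not N p Phi (Ys ! j) (set Xs) \<and> gaussian_rv M Eta \<and>
            (\<forall>\<omega>\<in>space M. X (Ys ! j) \<omega> =
               (\<Sum>l<length Xs. theta N p Phi (set Xs) (Xs ! l) (Ys ! j) * X (Xs ! l) \<omega>)
               + (\<Sum>v\<in>S. c v * X v \<omega>) + Eta \<omega>)"
      using gE by (intro exI[of _ "{}"] exI[of _ "\<lambda>_. 0"] exI[of _ Eta]) (simp add: Eta_def th_def Y_def)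
  qed
  have part2: "\<forall>x::nat \<Rightarrow> real.
            (\<exists>Xi. intervened_process M N p Phi eta Xs x Xi) \<and>
            (\<forall>Xi. intervened_process M N p Phi eta Xs x Xi \<longrightarrow>
               (\<forall>j<length Ys. (\<integral>\<omega>. Xi (Ys ! j) \<omega> \<partial>M) =
                  (\<Sum>l<length Xs. theta N p Phi (set Xs) (Xs ! l) (Ys ! j) * x l)))"
  proof (intro allI conjI impI)
    fix x :: "nat \<Rightarrow> real"
    define Xi0 where "Xi0 = (\<lambda>v \<omega>. X v \<omega> + (\<Sum>l<length Xs. hfun N p Phi (set Xs) (Xs ! l) v * (x l - X (Xs ! l) \<omega>)))"
    have I0: "intervened_process M N p Phi eta Xs x Xi0"
      unfolding Xi0_def by (rule interv_exists(1)[OF var Xs_ok dXs])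
    have E0: "(\<integral>\<omega>. Xi0 Y \<omega> \<partial>M) = (\<Sum>l<length Xs. theta N p Phi (set Xs) (Xs ! l) Y * x l)"
      if "fst Y < N" "Y \<notin> set Xs" for Y
      unfolding Xi0_def by (rule interv_exists(2)[OF var Xs_ok dXs that])
    show "\<exists>Xi. intervened_process M N p Phi eta Xs x Xi" using I0 by blast
    fix Xi j assume I: "intervened_process M N p Phi eta Xs x Xi" and j: "j < length Ys"
    define Y where "Y = Ys ! j"
    have YN: "fst Y < N" using Ys_ok j by (simp add: Y_def)
    have YX: "Y \<notin> set Xs" using disj j by (auto simp: Y_def)
    have ae: "AE \<omega> in M. Xi Y \<omega> = Xi0 Y \<omega>" by (rule interv_unique[OF st Xs_ok I I0 YN])
    have m1: "Xi Y \<in> borel_measurable M" using I YN unfolding intervened_process_def by blast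
    have m2: "Xi0 Y \<in> borel_measurable M" using I0 YN unfolding intervened_process_def by blast
    have "(\<integral>\<omega>. Xi Y \<omega> \<partial>M) = (\<integral>\<omega>. Xi0 Y \<omega> \<partial>M)" by (rule integral_cong_AE[OF m1 m2 ae])
    also have "\<dots> = (\<Sum>l<length Xs. theta N p Phi (set Xs) (Xs ! l) Y * x l)" by (rule E0[OF YN YX])
    finally show "(\<integral>\<omega>. Xi (Ys ! j) \<omega> \<partial>M) = (\<Sum>l<length Xs. theta N p Phi (set Xs) (Xs ! l) (Ys ! j) * x l)"
      by (simp add: Y_def)
  qed
  show ?thesis using part1 part2 by (intro conjI)
qed

end
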